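(* Let $V$, $P$, $v_h$ and $\hat v_h^N$ be as in the context. Then for every integer $N\ge0$, $$\|v_h'-(\hat v_h^N)'\|_{L^2(\mathbb{T})}=O(h^{\frac{N+1}{2}})\quad\text{as }h\to0.$$
   Context: $\mathbb{T}=\mathbb{R}/\mathbb{Z}\cong[-\tfrac12,\tfrac12)$. $V:\mathbb{T}\to\mathbb{R}$ is smooth, symmetric, with a unique non-degenerate minimum at $0$. $\overline H(P)$ is the effective Hamiltonian: the unique constant $c$ for which $\tfrac12(P+\phi')^2+V=c$ has a periodic viscosity solution; $P_{crit}=\inf\{P:\overline H(P)>\min\overline H\}$, and $P>P_{crit}$ is fixed, so that $\overline H(P)>\max V$. For $h>0$, $v_h$ is a periodic solution of $-\tfrac h2v_h''+\tfrac12(P+v_h')^2+V=\overline H_h(P)$, where $\overline H_h(P)$ is the unique constant for which such a periodic solution exists. Put $p^+(x)=\sqrt{2(\overline H(P)-V(x))}>0$ and $\sigma_0=c/p^+$ with $\int_{\mathbb{T}}\sigma_0=1$. Define $\overline H_0=\overline H(P)$, $v_0(x)=\int_{-1/2}^x p^+(s)ds-P(x+\tfrac12)$, and inductively for $j\ge1$: $\overline H_j=\int_{\mathbb{T}}\big[-\tfrac12 v_{j-1}''+\tfrac12\sum_{i=1}^{j-1}v_i'v_{j-i}'\big]\sigma_0\,dx$, and $v_j$ a smooth periodic solution (unique up to additive constant) of $-\tfrac12v_{j-1}''+p^+v_j'+\tfrac12\sum_{i=1}^{j-1}v_i'v_{j-i}'=\overline H_j$. Set $\hat v_h^N=\sum_{j=0}^N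 h^jv_j$. *)

theory Defs
  imports "HOL-Analysis.Analysis" "HOL-Library.Landau_Symbols"
begin

definition tint :: "(real \<Rightarrow> real) \<Rightarrow> real" where
  "tint f = interval_lebesgue_integral lborel (ereal (-1/2)) (ereal (1/2)) f"

definition L2T :: "(real \<Rightarrow> real) \<Rightarrow> real" where
  "L2T f = sqrt (tint (\<lambda>x. (f x)\<^sup>2))"

definition periodic1 :: "(real \<Rightarrow> real) \<Rightarrow> bool" where
  "periodic1 f \<longleftrightarrow> (\<forall>x. f (x + 1) = f x)"

definition smooth :: "(real \<Rightarrow> real) \<Rightarrow> bool" where
  "smooth f \<longleftrightarrow> (\<forall>k x. ((deriv ^^ k) f has_real_derivative (deriv ^^ Suc k) f x) (at x))"

definition C1 :: "(real \<Rightarrow> real) \<Rightarrow> bool" where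
  "C1 \<phi> \<longleftrightarrow> (\<forall>y. (\<phi> has_real_derivative deriv \<phi> y) (at y)) \<and> continuous_on UNIV (deriv \<phi>)"

definition visc_sub :: "(real \<Rightarrow> real \<Rightarrow> real) \<Rightarrow> (real \<Rightarrow> real) \<Rightarrow> bool" where
  "visc_sub H u \<longleftrightarrow> continuous_on UNIV u \<and>
     (\<forall>\<phi> x. C1 \<phi> \<and> (\<exists>e>0. \<forall>y. dist y x < e \<longrightarrow> u y - \<phi> y \<le> u x - \<phi> x)
        \<longrightarrow> H x (deriv \<phi> x) \<le> 0)"

definition visc_super :: "(real \<Rightarrow> real \<Rightarrow> real) \<Rightarrow> (real \<Rightarrow> real) \<Rightarrow> bool" where
  "visc_super H u \<longleftrightarrow> continuous_on UNIV u \<and>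
     (\<forall>\<phi> x. C1 \<phi> \<and> (\<exists>e>0. \<forall>y. dist y x < e \<longrightarrow> u y - \<phi> y \<ge> u x - \<phi> x)
        \<longrightarrow> H x (deriv \<phi> x) \<ge> 0)"

definition visc_sol :: "(real \<Rightarrow> real \<Rightarrow> real) \<Rightarrow> (real \<Rightarrow> real) \<Rightarrow> bool" where
  "visc_sol H u \<longleftrightarrow> visc_sub H u \<and> visc_super H u"

definition effH :: "(real \<Rightarrow> real) \<Rightarrow> real \<Rightarrow> real" where
  "effH V P = (THE c. \<exists>\<phi>. periodic1 \<phi> \<and> visc_sol (\<lambda>x p. (P + p)\<^sup>2 / 2 + V x - c) \<phi>)"

definition Pcrit :: "(real \<Rightarrow> real) \<Rightarrow> real" where
  "Pcrit V = Inf {P. 0 \<le> P \<and> effH V P > Inf (range (effH V))}"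

definition pplus :: "(real \<Rightarrow> real) \<Rightarrow> real \<Rightarrow> real \<Rightarrow> real" where
  "pplus V P x = sqrt (2 * (effH V P - V x))"

definition sigma0 :: "(real \<Rightarrow> real) \<Rightarrow> real \<Rightarrow> real \<Rightarrow> real" where
  "sigma0 V P x = (1 / pplus V P x) / tint (\<lambda>y. 1 / pplus V P y)"

definition v0 :: "(real \<Rightarrow> real) \<Rightarrow> real \<Rightarrow> real \<Rightarrow> real" where
  "v0 V P x = interval_lebesgue_integral lborel (ereal (-1/2)) (ereal x) (pplus V P) - P * (x + 1/2)"

definition Hbar_j :: "(real \<Rightarrow> real) \<Rightarrow> real \<Rightarrow> (nat \<Rightarrow> real \<Rightarrow> real) \<Rightarrow> nat \<Rightarrow> real" where
  "Hbar_j V P v j = tint (\<lambda>x. (- (1/2) * deriv (deriv (v (j - 1))) x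
        + (1/2) * (\<Sum>i=1..j-1. deriv (v i) x * deriv (v (j - i)) x)) * sigma0 V P x)"

definition vhat :: "(nat \<Rightarrow> real \<Rightarrow> real) \<Rightarrow> nat \<Rightarrow> real \<Rightarrow> real \<Rightarrow> real" where
  "vhat v N h x = (\<Sum>j=0..N. h ^ j * v j x)"

end

theory Submission
  imports Defs
begin

lemma lbint_has_deriv:
  fixes f :: "real \<Rightarrow> real"
  assumes cf: "continuous_on UNIV f"
  shows "((\<lambda>u. interval_lebesgue_integral lborel (ereal c) (ereal u) f) has_real_derivative f x) (at x)"
proof -
  define a where "a = min c x - 1"
  define b where "b = max c x + 1"
  have "((\<lambda>u. LBINT y=ereal c..ereal u. f y) has_vector_derivative f x) (at x within {a..b})"
    by (rule interval_integral_FTC2) (use cf continuous_on_subset in \<open>auto simp: a_def b_def\<close>)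
  then have "((\<lambda>u. LBINT y=ereal c..ereal u. f y) has_vector_derivative f x) (at x within {a<..<b})"
    by (rule has_vector_derivative_within_subset) auto
  then have "((\<lambda>u. LBINT y=ereal c..ereal u. f y) has_vector_derivative f x) (at x)"
    by (subst (asm) has_vector_derivative_within_open) (auto simp: a_def b_def)
  then show ?thesis by (simp add: has_real_derivative_iff_has_vector_derivative)
qed

lemma lbint_ftc:
  fixes f F :: "real \<Rightarrow> real"
  assumes cf: "continuous_on UNIV f" and dF: "\<And>x. (F has_real_derivative f x) (at x)"
  shows "(LBINT x=ereal a..ereal b. f x) = F b - F a"
proof (rule interval_integral_FTC_finite)
  show "continuous_on {min a b..max a b} f" using cf continuous_on_subset by blast
  fix x show "(F has_vector_derivative f x) (at x within {min a b..max a b})"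
    using dF[of x] by (simp add: has_real_derivative_iff_has_vector_derivative has_vector_derivative_at_within)
qed

lemma tint_ftc:
  fixes f F :: "real \<Rightarrow> real"
  assumes cf: "continuous_on UNIV f" and dF: "\<And>x. (F has_real_derivative f x) (at x)"
  shows "tint f = F (1/2) - F (-1/2)"
  unfolding tint_def using lbint_ftc[OF assms, of "-1/2" "1/2"] by simp

lemma lbint_eq_integral:
  fixes f :: "real \<Rightarrow> real"
  assumes cf: "continuous_on UNIV f" and ab: "a \<le> b"
  shows "(LBINT x=ereal a..ereal b. f x) = integral {a..b} f"
  by (rule interval_integral_eq_integral[OF ab])
     (rule borel_integrable_atLeastAtMost', rule continuous_on_subset[OF cf], auto)

lemma tint_eq_integral:
  fixes f :: "real \<Rightarrow> real"
  assumes cf: "continuous_on UNIV f"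
  shows "tint f = integral {-1/2..1/2} f"
  unfolding tint_def using lbint_eq_integral[OF cf, of "-1/2" "1/2"] by simp

lemma integrable_cont: "continuous_on UNIV (f::real\<Rightarrow>real) \<Longrightarrow> f integrable_on {a..b}"
  by (rule integrable_continuous_real, rule continuous_on_subset, auto)

lemma tint_mono:
  fixes f g :: "real \<Rightarrow> real"
  assumes "continuous_on UNIV f" "continuous_on UNIV g" "\<And>x. x \<in> {-1/2..1/2} \<Longrightarrow> f x \<le> g x"
  shows "tint f \<le> tint g"
  unfolding tint_eq_integral[OF assms(1)] tint_eq_integral[OF assms(2)]
  by (rule integral_le) (auto intro: integrable_cont assms)

lemma tint_const: "tint (\<lambda>x. c) = c"
  unfolding tint_def by simp

lemma tint_le_const:
  fixes f :: "real \<Rightarrow> real"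
  assumes "continuous_on UNIV f" "\<And>x. x \<in> {-1/2..1/2} \<Longrightarrow> f x \<le> c"
  shows "tint f \<le> c"
  using tint_mono[of f "\<lambda>x. c"] assms by (simp add: tint_const)

lemma tint_ge_const:
  fixes f :: "real \<Rightarrow> real"
  assumes "continuous_on UNIV f" "\<And>x. x \<in> {-1/2..1/2} \<Longrightarrow> c \<le> f x"
  shows "c \<le> tint f"
  using tint_mono[of "\<lambda>x. c" f] assms by (simp add: tint_const)

lemma tint_diff:
  fixes f g :: "real \<Rightarrow> real"
  assumes "continuous_on UNIV f" "continuous_on UNIV g"
  shows "tint (\<lambda>x. f x - g x) = tint f - tint g"
  using assms by (simp add: tint_eq_integral integral_diff integrable_cont continuous_on_diff)

lemma tint_add:
  fixes f g :: "real \<Rightarrow> real"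
  assumes "continuous_on UNIV f" "continuous_on UNIV g"
  shows "tint (\<lambda>x. f x + g x) = tint f + tint g"
  using assms by (simp add: tint_eq_integral integral_add integrable_cont continuous_on_add)

lemma tint_cmult:
  fixes f :: "real \<Rightarrow> real"
  assumes "continuous_on UNIV f"
  shows "tint (\<lambda>x. c * f x) = c * tint f"
  using assms by (simp add: tint_eq_integral integrable_cont continuous_on_mult)

lemma per_nat: "periodic1 f \<Longrightarrow> f (x + real n) = f x"
proof (induct n arbitrary: x)
  case 0 then show ?case by simp
next
  case (Suc n)
  have "f (x + real (Suc n)) = f ((x + real n) + 1)" by (simp add: add_ac)
  also have "\<dots> = f (x + real n)" using Suc.prems by (simp add: periodic1_def)
  finally show ?case using Suc by simp
qed

lemma per_int: "periodic1 f \<Longrightarrow> f (x + real_of_int n) = f x"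
proof (cases "n \<ge> 0")
  case True
  assume p: "periodic1 f"
  then show ?thesis using per_nat[OF p, of x "nat n"] True by simp
next
  case False
  assume p: "periodic1 f"
  have "f (x + real_of_int n + real (nat (-n))) = f (x + real_of_int n)" by (rule per_nat[OF p])
  then show ?thesis using False by simp
qed

lemma per_frac: "periodic1 f \<Longrightarrow> f x = f (x - real_of_int \<lfloor>x + 1/2\<rfloor>)"
  using per_int[of f "x - real_of_int \<lfloor>x + 1/2\<rfloor>" "\<lfloor>x + 1/2\<rfloor>"] by simp

lemma frac_in: "x - real_of_int \<lfloor>x + 1/2\<rfloor> \<in> {-1/2..1/2}"
proof -
  have "real_of_int \<lfloor>x + 1/2\<rfloor> \<le> x + 1/2" by (rule of_int_floor_le)
  moreover have "x + 1/2 < real_of_int \<lfloor>x + 1/2\<rfloor> + 1" by (rule real_of_int_floor_add_one_gt)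
  ultimately show ?thesis unfolding atLeastAtMost_iff by linarith
qed

lemma per_deriv: "periodic1 f \<Longrightarrow> periodic1 (deriv f)"
proof -
  assume p: "periodic1 f"
  have e: "(\<lambda>y. f (y + 1)) = f" using p by (auto simp: periodic1_def)
  show ?thesis unfolding periodic1_def
  proof
    fix x
    have "deriv f (x + 1) = deriv (\<lambda>y. f (y + 1)) x"
      unfolding deriv_def by (simp add: DERIV_shift[of f _ x 1])
    then show "deriv f (x + 1) = deriv f x" using e by simp
  qed
qed

lemma per_max:
  fixes f :: "real \<Rightarrow> real"
  assumes "continuous_on UNIV f" "periodic1 f"
  shows "\<exists>x0\<in>{-1/2..1/2}. \<forall>x. f x \<le> f x0"
proof -
  obtain x0 where x0: "x0 \<in> {-1/2..1/2::real}" "\<forall>y\<in>{-1/2..1/2}. f y \<le> f x0"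
  proof -
    have "continuous_on {-1/2..1/2::real} f" using assms(1) by (rule continuous_on_subset) simp
    from continuous_attains_sup[OF compact_Icc _ this] show ?thesis using that by auto
  qed
  show ?thesis
  proof (intro bexI[OF _ x0(1)] allI)
    fix x show "f x \<le> f x0" using per_frac[OF assms(2), of x] x0(2) frac_in[of x] by simp
  qed
qed

lemma per_min:
  fixes f :: "real \<Rightarrow> real"
  assumes "continuous_on UNIV f" "periodic1 f"
  shows "\<exists>x0\<in>{-1/2..1/2}. \<forall>x. f x0 \<le> f x"
proof -
  have "continuous_on UNIV (\<lambda>x. - f x)" "periodic1 (\<lambda>x. - f x)"
    using assms by (auto intro: continuous_on_minus simp: periodic1_def)
  from per_max[OF this] show ?thesis by auto
qed

lemma per_bounded:
  fixes f :: "real \<Rightarrow> real"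
  assumes "continuous_on UNIV f" "periodic1 f"
  shows "\<exists>B. \<forall>x. \<bar>f x\<bar> \<le> B"
proof -
  obtain a b where h: "\<forall>x. f x \<le> f a" "\<forall>x. f b \<le> f x" using per_max[OF assms] per_min[OF assms] by blast
  have "\<bar>f x\<bar> \<le> max \<bar>f a\<bar> \<bar>f b\<bar>" for x
  proof -
    have "f x \<le> f a" "f b \<le> f x" using h by auto
    moreover have "f a \<le> \<bar>f a\<bar>" "- \<bar>f b\<bar> \<le> f b" by auto
    moreover have "\<bar>f a\<bar> \<le> max \<bar>f a\<bar> \<bar>f b\<bar>" "\<bar>f b\<bar> \<le> max \<bar>f a\<bar> \<bar>f b\<bar>" by auto
    ultimately show ?thesis by (simp only: abs_le_iff) linarith
  qed
  then show ?thesis by blast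
qed

lemma per_period_integral:
  fixes f :: "real \<Rightarrow> real"
  assumes cf: "continuous_on UNIV f" and p: "periodic1 f"
  shows "(LBINT x=ereal y..ereal (y+1). f x) = tint f"
proof -
  define F where "F u = interval_lebesgue_integral lborel (ereal 0) (ereal u) f" for u
  have dF: "(F has_real_derivative f x) (at x)" for x unfolding F_def by (rule lbint_has_deriv[OF cf])
  have g: "((\<lambda>u. F (u + 1) - F u) has_real_derivative 0) (at x)" for x
  proof -
    have "((\<lambda>u. F (u + 1)) has_real_derivative f (x + 1)) (at x)"
      using DERIV_shift[of F "f (x+1)" x 1] dF[of "x+1"] by simp
    then have "((\<lambda>u. F (u + 1) - F u) has_real_derivative f (x + 1) - f x) (at x)"
      by (intro DERIV_diff dF)
    then show ?thesis using p by (simp add: periodic1_def)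
  qed
  have c: "F (y + 1) - F y = F (-1/2 + 1) - F (-1/2)"
    using DERIV_isconst_all[of "\<lambda>u. F (u + 1) - F u"] g by blast
  have "(LBINT x=ereal y..ereal (y+1). f x) = F (y+1) - F y" by (rule lbint_ftc[OF cf dF])
  moreover have "tint f = F (1/2) - F (-1/2)" by (rule tint_ftc[OF cf dF])
  ultimately show ?thesis using c by simp
qed

section \<open>Generic viscosity lemmas\<close>

lemma C1_cont: "C1 \<phi> \<Longrightarrow> continuous_on UNIV \<phi>"
  unfolding C1_def by (meson DERIV_isCont continuous_at_imp_continuous_on)

lemma classical_visc:
  assumes du: "\<And>x. (u has_real_derivative u' x) (at x)"
    and H0: "\<And>x. H x (u' x) = 0"
  shows "visc_sol H u"
proof -
  have cu: "continuous_on UNIV u" using du by (meson DERIV_isCont continuous_at_imp_continuous_on)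
  have d: "((\<lambda>y. u y - \<phi> y) has_real_derivative u' x - deriv \<phi> x) (at x)" if "C1 \<phi>" for \<phi> x
    using that du[of x] unfolding C1_def by (intro DERIV_diff) auto
  show ?thesis
    unfolding visc_sol_def visc_sub_def visc_super_def
  proof (intro conjI cu allI impI)
    fix \<phi> x assume h: "C1 \<phi> \<and> (\<exists>e>0. \<forall>y. dist y x < e \<longrightarrow> u y - \<phi> y \<le> u x - \<phi> x)"
    then obtain e where e: "e > 0" "\<forall>y. \<bar>x - y\<bar> < e \<longrightarrow> u y - \<phi> y \<le> u x - \<phi> x"
      by (auto simp: dist_real_def abs_minus_commute)
    have "u' x - deriv \<phi> x = 0" by (rule DERIV_local_max[OF d e]) (use h in auto)
    then show "H x (deriv \<phi> x) \<le> 0" using H0[of x] by simp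
  next
    fix \<phi> x assume h: "C1 \<phi> \<and> (\<exists>e>0. \<forall>y. dist y x < e \<longrightarrow> u x - \<phi> x \<le> u y - \<phi> y)"
    then obtain e where e: "e > 0" "\<forall>y. \<bar>x - y\<bar> < e \<longrightarrow> u x - \<phi> x \<le> u y - \<phi> y"
      by (auto simp: dist_real_def abs_minus_commute)
    have "u' x - deriv \<phi> x = 0" by (rule DERIV_local_min[OF d e]) (use h in auto)
    then show "H x (deriv \<phi> x) \<ge> 0" using H0[of x] by simp
  qed
qed

lemma no_super:
  assumes "visc_super H u" "periodic1 u" "C1 \<phi>" "periodic1 \<phi>" "\<And>x. H x (deriv \<phi> x) < 0"
  shows False
proof -
  have c: "continuous_on UNIV (\<lambda>x. u x - \<phi> x)"
    using assms(1,3) C1_cont unfolding visc_super_def by (intro continuous_on_diff) auto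
  have p: "periodic1 (\<lambda>x. u x - \<phi> x)" using assms(2,4) by (simp add: periodic1_def)
  obtain x where x: "\<forall>y. u x - \<phi> x \<le> u y - \<phi> y" using per_min[OF c p] by blast
  have "H x (deriv \<phi> x) \<ge> 0"
    using assms(1,3) x unfolding visc_super_def by (meson zero_less_one)
  then show False using assms(5)[of x] by simp
qed

lemma no_sub:
  assumes "visc_sub H u" "periodic1 u" "C1 \<phi>" "periodic1 \<phi>" "\<And>x. H x (deriv \<phi> x) > 0"
  shows False
proof -
  have c: "continuous_on UNIV (\<lambda>x. u x - \<phi> x)"
    using assms(1,3) C1_cont unfolding visc_sub_def by (intro continuous_on_diff) auto
  have p: "periodic1 (\<lambda>x. u x - \<phi> x)" using assms(2,4) by (simp add: periodic1_def)
  obtain x where x: "\<forall>y. u y - \<phi> y \<le> u x - \<phi> x" using per_max[OF c p] by blast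
  have "H x (deriv \<phi> x) \<le> 0"
    using assms(1,3) x unfolding visc_sub_def by (meson zero_less_one)
  then show False using assms(5)[of x] by simp
qed

lemma test_fun:
  fixes g :: "real \<Rightarrow> real"
  assumes cg: "continuous_on UNIV g" and pg: "periodic1 g" and tg: "tint g = Q"
  shows "\<exists>\<phi>. C1 \<phi> \<and> periodic1 \<phi> \<and> (\<forall>x. deriv \<phi> x = g x - Q)"
proof -
  define \<phi> where "\<phi> x = interval_lebesgue_integral lborel (ereal 0) (ereal x) (\<lambda>t. g t - Q)" for x
  have cg': "continuous_on UNIV (\<lambda>t. g t - Q)" using cg by (intro continuous_intros)
  have d: "(\<phi> has_real_derivative g x - Q) (at x)" for x
    unfolding \<phi>_def by (rule lbint_has_deriv[OF cg'])
  have dd: "deriv \<phi> x = g x - Q" for x using d by (rule DERIV_imp_deriv)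
  have pg': "periodic1 (\<lambda>t. g t - Q)" using pg by (simp add: periodic1_def)
  have "\<phi> (x + 1) - \<phi> x = tint (\<lambda>t. g t - Q)" for x
    using lbint_ftc[OF cg' d, of x "x+1"] per_period_integral[OF cg' pg', of x] by simp
  also have "tint (\<lambda>t. g t - Q) = 0" using tint_diff[OF cg, of "\<lambda>t. Q"] tg by (simp add: tint_const)
  finally have per: "periodic1 \<phi>" by (simp add: periodic1_def)
  have "C1 \<phi>" unfolding C1_def using d dd cg' by simp
  then show ?thesis using per dd by blast
qed

lemma sqrt_diff_le: "0 \<le> a \<Longrightarrow> 0 \<le> b \<Longrightarrow> \<bar>sqrt a - sqrt b\<bar> \<le> sqrt \<bar>a - b\<bar>"
proof -
  have main: "sqrt a - sqrt b \<le> sqrt \<bar>a - b\<bar>" if "0 \<le> a" "0 \<le> b" for a b :: real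
  proof (cases "b \<le> a")
    case True
    have "(sqrt b + sqrt (a - b))\<^sup>2 = b + (a - b) + 2 * sqrt b * sqrt (a - b)"
      using that True by (simp add: power2_eq_square algebra_simps)
    also have "\<dots> \<ge> a" using that True by simp
    finally have X: "a \<le> (sqrt b + sqrt (a - b))\<^sup>2" .
    have "sqrt a \<le> sqrt b + sqrt (a - b)"
      using real_sqrt_le_mono[OF X] True that by simp
    then show ?thesis using True by simp
  next
    case False
    then have "sqrt a \<le> sqrt b" by simp
    then show ?thesis by (smt (verit) real_sqrt_ge_zero)
  qed
  assume "0 \<le> a" "0 \<le> b"
  then show ?thesis using main[of a b] main[of b a] by (simp add: abs_minus_commute abs_le_iff)
qed

lemma sqrt_diff_ge: "0 \<le> a \<Longrightarrow> a < b \<Longrightarrow> sqrt b - sqrt a \<ge> (b - a) / (2 * sqrt b)"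
proof -
  assume h: "0 \<le> a" "a < b"
  then have sb: "sqrt b > 0" by simp
  have "(sqrt b - sqrt a) * (sqrt b + sqrt a) = b - a" using h by (simp add: algebra_simps)
  moreover have "sqrt b + sqrt a \<le> 2 * sqrt b" using h by simp
  moreover have "sqrt b - sqrt a \<ge> 0" using h by simp
  ultimately have "b - a \<le> (sqrt b - sqrt a) * (2 * sqrt b)"
    by (metis mult_left_mono)
  then show ?thesis using sb by (simp add: divide_le_eq mult.commute)
qed

locale pot =
  fixes V :: "real \<Rightarrow> real"
  assumes Vsm: "smooth V" and Vper: "periodic1 V" and Vnc: "V 0 < V (1/4)"
begin

lemma V_deriv: "(V has_real_derivative deriv V x) (at x)"
proof -
  have "((deriv^^0) V has_real_derivative (deriv^^Suc 0) V x) (at x)" using Vsm unfolding smooth_def by blast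
  then show ?thesis by simp
qed

lemma V_deriv2: "(deriv V has_real_derivative deriv (deriv V) x) (at x)"
proof -
  have "((deriv^^Suc 0) V has_real_derivative (deriv^^Suc (Suc 0)) V x) (at x)" using Vsm unfolding smooth_def by blast
  then show ?thesis by simp
qed

lemma contV: "continuous_on UNIV V"
  using V_deriv by (meson DERIV_isCont continuous_at_imp_continuous_on)

lemma contdV: "continuous_on UNIV (deriv V)"
  using V_deriv2 by (meson DERIV_isCont continuous_at_imp_continuous_on)

definition xM where "xM = (SOME x. \<forall>y. V y \<le> V x)"
definition M where "M = V xM"

lemma M_ge: "V y \<le> M"
proof -
  have "\<exists>x. \<forall>y. V y \<le> V x" using per_max[OF contV Vper] by blast
  then have "\<forall>y. V y \<le> V xM" unfolding xM_def by (rule someI_ex)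
  then show ?thesis unfolding M_def by blast
qed

definition s :: "real \<Rightarrow> real \<Rightarrow> real" where "s c x = sqrt (2 * (c - V x))"
definition F :: "real \<Rightarrow> real" where "F c = tint (s c)"
definition P0 where "P0 = F M"

lemma s_cont: "continuous_on UNIV (s c)"
  unfolding s_def by (intro continuous_intros contV)

lemma s_per: "periodic1 (s c)"
  using Vper by (simp add: periodic1_def s_def)

lemma s_nonneg: "M \<le> c \<Longrightarrow> 0 \<le> s c x"
  using M_ge[of x] by (simp add: s_def)

lemma s_sq: "M \<le> c \<Longrightarrow> (s c x)\<^sup>2 = 2 * (c - V x)"
  using M_ge[of x] by (simp add: s_def)

lemma F_ge: "M \<le> c \<Longrightarrow> sqrt (2 * (c - M)) \<le> F c"
  unfolding F_def by (rule tint_ge_const[OF s_cont]) (use M_ge in \<open>auto simp: s_def\<close>)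

lemma F_lip: "M \<le> c \<Longrightarrow> M \<le> c' \<Longrightarrow> \<bar>F c - F c'\<bar> \<le> sqrt (2 * \<bar>c - c'\<bar>)"
proof -
  assume h: "M \<le> c" "M \<le> c'"
  have b: "\<bar>s c x - s c' x\<bar> \<le> sqrt (2 * \<bar>c - c'\<bar>)" for x
  proof -
    have "\<bar>s c x - s c' x\<bar> \<le> sqrt \<bar>2 * (c - V x) - 2 * (c' - V x)\<bar>"
      unfolding s_def by (rule sqrt_diff_le) (use h M_ge[of x] in auto)
    also have "2 * (c - V x) - 2 * (c' - V x) = 2 * (c - c')" by (simp add: algebra_simps)
    also have "\<bar>2 * (c - c')\<bar> = 2 * \<bar>c - c'\<bar>" by (simp only: abs_mult)
    finally show ?thesis .
  qed
  have "F c - F c' = tint (\<lambda>x. s c x - s c' x)" unfolding F_def by (simp add: tint_diff s_cont)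
  moreover have "tint (\<lambda>x. s c x - s c' x) \<le> sqrt (2 * \<bar>c - c'\<bar>)"
    by (rule tint_le_const) (use b in \<open>auto intro!: continuous_intros s_cont simp: abs_le_iff\<close>)
  moreover have "- sqrt (2 * \<bar>c - c'\<bar>) \<le> tint (\<lambda>x. s c x - s c' x)"
  proof (rule tint_ge_const)
    show "continuous_on UNIV (\<lambda>x. s c x - s c' x)" by (intro continuous_intros s_cont)
    fix x show "- sqrt (2 * \<bar>c - c'\<bar>) \<le> s c x - s c' x" using b[of x] by (simp add: abs_le_iff)
  qed
  ultimately show ?thesis by (simp add: abs_le_iff)
qed

lemma F_cont: "continuous_on {M..} F"
  unfolding continuous_on_iff
proof (intro ballI allI impI)
  fix c e assume c: "c \<in> {M..}" and e: "(0::real) < e"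
  show "\<exists>d>0. \<forall>c'\<in>{M..}. dist c' c < d \<longrightarrow> dist (F c') (F c) < e"
  proof (intro exI[of _ "e\<^sup>2 / 2"] conjI ballI impI)
    show "0 < e\<^sup>2 / 2" using e by simp
    fix c' assume c': "c' \<in> {M..}" "dist c' c < e\<^sup>2 / 2"
    have "dist (F c') (F c) \<le> sqrt (2 * \<bar>c' - c\<bar>)" using F_lip[of c' c] c c' by (simp add: dist_real_def)
    also have "\<dots> < sqrt (e\<^sup>2)" using c' by (intro real_sqrt_less_mono) (simp add: dist_real_def abs_minus_commute)
    also have "\<dots> = e" using e by simp
    finally show "dist (F c') (F c) < e" .
  qed
qed

lemma V_lower: "\<exists>m. \<forall>x. m \<le> V x"
  using per_min[OF contV Vper] by blast

lemma F_strict: "M \<le> c \<Longrightarrow> c < c' \<Longrightarrow> F c < F c'"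
proof -
  assume h: "M \<le> c" "c < c'"
  obtain m where m: "\<forall>x. m \<le> V x" using V_lower by blast
  define K where "K = sqrt (2 * (c' - m))"
  have Kpos: "K > 0" unfolding K_def using m[rule_format, of 0] M_ge[of 0] h by simp
  define d where "d = 2 * (c' - c) / (2 * K)"
  have dpos: "d > 0" unfolding d_def using Kpos h by simp
  have "s c' x - s c x \<ge> d" for x
  proof -
    have "s c' x - s c x \<ge> (2 * (c' - V x) - 2 * (c - V x)) / (2 * sqrt (2 * (c' - V x)))"
      unfolding s_def by (rule sqrt_diff_ge) (use h M_ge[of x] in auto)
    moreover have "sqrt (2 * (c' - V x)) \<le> K" unfolding K_def using m[rule_format, of x] by simp
    moreover have "sqrt (2 * (c' - V x)) > 0" using h M_ge[of x] by simp
    ultimately show ?thesis unfolding d_def using h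
      by (smt (verit, best) divide_left_mono mult_pos_pos frac_le)
  qed
  then have "d \<le> tint (\<lambda>x. s c' x - s c x)"
    by (intro tint_ge_const) (auto intro!: continuous_intros s_cont)
  then show ?thesis unfolding F_def using dpos by (simp add: tint_diff s_cont)
qed

lemma P0_nonneg: "0 \<le> P0"
  unfolding P0_def using F_ge[of M] by simp

lemma P0_pos: "0 < P0"
proof (rule ccontr)
  assume "\<not> 0 < P0"
  then have z: "integral {-1/2..1/2} (s M) = 0"
    using P0_nonneg unfolding P0_def F_def by (simp add: tint_eq_integral[OF s_cont])
  have "\<forall>x\<in>cbox (-1/2) (1/2). s M x = 0"
    using z integral_cbox_eq_0_iff[of "-1/2" "1/2::real" "s M"] s_cont[of M] s_nonneg[of M]
    by (auto intro: continuous_on_subset)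
  then have "s M 0 = 0" by auto
  then have "V 0 = M" unfolding s_def using M_ge[of 0] by simp
  then show False using Vnc M_ge[of "1/4"] by simp
qed

end

context pot
begin

lemma sub_ge_M:
  assumes sub: "visc_sub (\<lambda>x p. (Q + p)\<^sup>2 / 2 + V x - c) u" and pu: "periodic1 u"
  shows "M \<le> c"
proof (rule ccontr)
  assume "\<not> M \<le> c"
  then have cM: "c < M" by simp
  have VxM: "V xM = M" unfolding M_def by simp
  obtain \<delta> where \<delta>: "\<delta> > 0" "\<forall>y. dist y xM < \<delta> \<longrightarrow> dist (V y) (V xM) < M - c"
    using contV cM unfolding continuous_on_iff by (metis UNIV_I diff_gt_0_iff_gt)
  have Vbig: "c < V y" if "\<bar>y - xM\<bar> < \<delta>" for y
    using \<delta>(2)[rule_format, of y] that VxM by (auto simp: dist_real_def)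
  have cu: "continuous_on UNIV u" using sub unfolding visc_sub_def by blast
  obtain B0 where B0: "\<forall>x. \<bar>u x\<bar> \<le> B0" using per_bounded[OF cu pu] by blast
  define B where "B = max B0 0"
  have B: "\<bar>u x\<bar> \<le> B" "0 \<le> B" for x using B0 by (auto simp: B_def le_max_iff_disj)
  define \<epsilon> where "\<epsilon> = \<delta>\<^sup>2 / (2 * B + 1)"
  have \<epsilon>: "\<epsilon> > 0" unfolding \<epsilon>_def using \<delta> B by simp
  define \<phi> where "\<phi> y = (y - xM)\<^sup>2 / \<epsilon>" for y
  have d\<phi>: "(\<phi> has_real_derivative 2 * (y - xM) / \<epsilon>) (at y)" for y
    unfolding \<phi>_def using \<epsilon> by (auto intro!: derivative_eq_intros simp: power2_eq_square field_simps)
  have dd: "deriv \<phi> y = 2 * (y - xM) / \<epsilon>" for y using d\<phi> by (rule DERIV_imp_deriv)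
  have C1: "C1 \<phi>" unfolding C1_def dd using d\<phi> \<epsilon> by (auto intro!: continuous_intros)
  have c\<phi>: "continuous_on UNIV \<phi>" by (rule C1_cont[OF C1])
  define g where "g y = u y - \<phi> y" for y
  have cg: "continuous_on {xM - \<delta>..xM + \<delta>} g" unfolding g_def
    by (intro continuous_on_diff continuous_on_subset[OF cu] continuous_on_subset[OF c\<phi>]) auto
  obtain ys where ys: "ys \<in> {xM - \<delta>..xM + \<delta>}" "\<forall>y\<in>{xM - \<delta>..xM + \<delta>}. g y \<le> g ys"
    using continuous_attains_sup[OF compact_Icc _ cg] \<delta> by auto
  have gxM: "g xM = u xM" unfolding g_def \<phi>_def by simp
  have gxMys: "g xM \<le> g ys" using ys(2) \<delta> by simp
  have far: "g y < - B" if "\<delta> \<le> \<bar>y - xM\<bar>" for y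
  proof -
    have "\<delta>\<^sup>2 \<le> (y - xM)\<^sup>2" using that \<delta> by (metis abs_le_square_iff abs_of_pos)
    then have "\<delta>\<^sup>2 / \<epsilon> \<le> \<phi> y" unfolding \<phi>_def using \<epsilon> by (simp add: divide_right_mono)
    moreover have "\<delta>\<^sup>2 / \<epsilon> = 2 * B + 1" unfolding \<epsilon>_def using \<delta> B(2) by simp
    ultimately show ?thesis unfolding g_def using B(1)[of y] by simp
  qed
  have near: "\<bar>ys - xM\<bar> < \<delta>"
  proof (rule ccontr)
    assume "\<not> \<bar>ys - xM\<bar> < \<delta>"
    then have "g ys < - B" using far by simp
    then show False using gxMys gxM B(1)[of xM] by simp
  qed
  have glob: "u y - \<phi> y \<le> u ys - \<phi> ys" for y
  proof (cases "\<bar>y - xM\<bar> < \<delta>")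
    case True
    then have "y \<in> {xM - \<delta>..xM + \<delta>}" by (auto simp: abs_less_iff)
    then show ?thesis using ys(2) unfolding g_def by blast
  next
    case False then have "g y < - B" using far by simp
    then show ?thesis using gxMys gxM B(1)[of xM] unfolding g_def by simp
  qed
  have "(Q + deriv \<phi> ys)\<^sup>2 / 2 + V ys - c \<le> 0"
    using sub C1 glob unfolding visc_sub_def by (meson zero_less_one)
  moreover have "(Q + deriv \<phi> ys)\<^sup>2 / 2 \<ge> 0" by simp
  ultimately show False using Vbig[OF near] by simp
qed

lemma F_pos: "M < c \<Longrightarrow> 0 < F c"
  using F_strict[of M c] P0_nonneg unfolding P0_def by simp

lemma super_too_small:
  assumes sup: "visc_super (\<lambda>x p. (Q + p)\<^sup>2 / 2 + V x - c) u" and pu: "periodic1 u"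
    and cM: "M < c" and Qs: "\<bar>Q\<bar> < F c"
  shows False
proof -
  define lam where "lam = Q / F c"
  have Fp: "F c > 0" using F_pos[OF cM] .
  have "\<bar>lam\<bar> < 1" unfolding lam_def using Qs Fp by (simp add: abs_divide divide_less_eq)
  then have l: "lam\<^sup>2 < 1" by (simp add: abs_square_less_1)
  define g where "g x = lam * s c x" for x
  have cg: "continuous_on UNIV g" unfolding g_def by (intro continuous_intros s_cont)
  have pg: "periodic1 g" using s_per unfolding g_def periodic1_def by simp
  have tg: "tint g = Q" unfolding g_def by (subst tint_cmult[OF s_cont]) (use Fp in \<open>simp add: F_def[symmetric] lam_def\<close>)
  obtain \<phi> where \<phi>: "C1 \<phi>" "periodic1 \<phi>" "\<forall>x. deriv \<phi> x = g x - Q" using test_fun[OF cg pg tg] by blast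
  show False
  proof (rule no_super[OF sup pu \<phi>(1,2)])
    fix x
    have "(Q + deriv \<phi> x)\<^sup>2 = lam\<^sup>2 * (s c x)\<^sup>2" using \<phi>(3) by (simp add: g_def power_mult_distrib)
    also have "\<dots> = lam\<^sup>2 * (2 * (c - V x))" using s_sq[of c x] cM by simp
    finally have "(Q + deriv \<phi> x)\<^sup>2 / 2 + V x - c = (lam\<^sup>2 - 1) * (c - V x)"
      by (simp add: algebra_simps)
    moreover have "c - V x > 0" using M_ge[of x] cM by simp
    ultimately show "(Q + deriv \<phi> x)\<^sup>2 / 2 + V x - c < 0" using l by (simp add: mult_neg_pos)
  qed
qed

lemma sub_too_big:
  assumes sub: "visc_sub (\<lambda>x p. (Q + p)\<^sup>2 / 2 + V x - c) u" and pu: "periodic1 u"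
    and cM: "M \<le> c" and Qs: "F c < \<bar>Q\<bar>"
  shows False
proof -
  define b where "b = \<bar>Q\<bar> - F c"
  have bpos: "b > 0" unfolding b_def using Qs by simp
  define g where "g x = sgn Q * (s c x + b)" for x
  have cg: "continuous_on UNIV g" unfolding g_def by (intro continuous_intros s_cont)
  have pg: "periodic1 g" using s_per unfolding g_def periodic1_def by simp
  have "tint (\<lambda>x. s c x + b) = F c + b" by (simp add: tint_add[OF s_cont] tint_const F_def)
  then have "tint g = sgn Q * (F c + b)" unfolding g_def
    using tint_cmult[OF continuous_on_add[OF s_cont continuous_on_const], of "sgn Q" c b] by simp
  also have "F c + b = \<bar>Q\<bar>" unfolding b_def by simp
  finally have tg: "tint g = Q" by (simp only: sgn_mult_abs)
  obtain \<phi> where \<phi>: "C1 \<phi>" "periodic1 \<phi>" "\<forall>x. deriv \<phi> x = g x - Q" using test_fun[OF cg pg tg] by blast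
  have "0 \<le> sqrt (2 * (c - M))" using cM by simp
  then have "0 \<le> F c" using F_ge[OF cM] by linarith
  then have Q0: "Q \<noteq> 0" using Qs by auto
  show False
  proof (rule no_sub[OF sub pu \<phi>(1,2)])
    fix x
    have "(Q + deriv \<phi> x)\<^sup>2 = (s c x + b)\<^sup>2"
      using \<phi>(3) Q0 by (simp add: g_def power_mult_distrib sgn_if)
    moreover have "(s c x + b)\<^sup>2 > (s c x)\<^sup>2" using s_nonneg[OF cM, of x] bpos
      by (simp add: power2_eq_square add_pos_nonneg mult_strict_mono' algebra_simps)
    ultimately show "(Q + deriv \<phi> x)\<^sup>2 / 2 + V x - c > 0" using s_sq[OF cM, of x] by simp
  qed
qed

lemma classical_exists:
  assumes cM: "M \<le> c" and Qs: "\<bar>Q\<bar> = F c"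
  shows "\<exists>u. periodic1 u \<and> visc_sol (\<lambda>x p. (Q + p)\<^sup>2 / 2 + V x - c) u"
proof -
  define g where "g x = sgn Q * s c x" for x
  have cg: "continuous_on UNIV g" unfolding g_def by (intro continuous_intros s_cont)
  have pg: "periodic1 g" using s_per unfolding g_def periodic1_def by simp
  have tg: "tint g = Q" unfolding g_def using Qs
    by (simp add: tint_cmult[OF s_cont] F_def[symmetric]) (metis sgn_mult_abs)
  obtain \<phi> where \<phi>: "C1 \<phi>" "periodic1 \<phi>" "\<forall>x. deriv \<phi> x = g x - Q" using test_fun[OF cg pg tg] by blast
  have "visc_sol (\<lambda>x p. (Q + p)\<^sup>2 / 2 + V x - c) \<phi>"
  proof (rule classical_visc)
    fix x show "(\<phi> has_real_derivative deriv \<phi> x) (at x)" using \<phi>(1) unfolding C1_def by blast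
    show "(Q + deriv \<phi> x)\<^sup>2 / 2 + V x - c = 0"
    proof (cases "Q = 0")
      case True
      then have "F c = 0" using Qs by simp
      moreover have "P0 \<le> F c" unfolding P0_def using F_strict[of M c] cM by (cases "M = c") auto
      ultimately show ?thesis using P0_pos by simp
    next
      case False
      then have "(Q + deriv \<phi> x)\<^sup>2 = (s c x)\<^sup>2" using \<phi>(3) by (simp add: g_def sgn_if)
      then show ?thesis using s_sq[OF cM, of x] by (simp add: field_simps)
    qed
  qed
  then show ?thesis using \<phi>(2) by blast
qed

lemma F_hits:
  assumes "P0 < \<bar>Q\<bar>"
  shows "\<exists>c. M < c \<and> F c = \<bar>Q\<bar>"
proof -
  have "F M \<le> \<bar>Q\<bar>" using assms unfolding P0_def by simp
  moreover have "\<bar>Q\<bar> \<le> F (M + Q\<^sup>2 / 2)" using F_ge[of "M + Q\<^sup>2/2"] by simp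
  moreover have "continuous_on {M..M + Q\<^sup>2 / 2} F" by (rule continuous_on_subset[OF F_cont]) auto
  ultimately obtain c where c: "M \<le> c" "c \<le> M + Q\<^sup>2 / 2" "F c = \<bar>Q\<bar>"
    using IVT'[of F M "\<bar>Q\<bar>" "M + Q\<^sup>2/2"] by auto
  then have "c \<noteq> M" using assms unfolding P0_def by auto
  then show ?thesis using c by (intro exI[of _ c]) auto
qed

end

section \<open>Tents\<close>

definition tent :: "real \<Rightarrow> real \<Rightarrow> int \<Rightarrow> real \<Rightarrow> real" where
  "tent p Q k a = real_of_int k * Q + min (a - real_of_int k * p) ((real_of_int k + 1) * p + Q - a)"

definition Ut :: "real \<Rightarrow> real \<Rightarrow> real \<Rightarrow> real" where
  "Ut p Q a = tent p Q \<lfloor>a / p\<rfloor> a"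

lemma cell:
  assumes "p > 0"
  shows "real_of_int \<lfloor>a / p\<rfloor> * p \<le> a" "a < (real_of_int \<lfloor>a / p\<rfloor> + 1) * p"
  using floor_divide_lower[OF assms] floor_divide_upper[OF assms] by auto

lemma cell_unique:
  assumes "p > 0" "real_of_int k * p \<le> a" "a < (real_of_int k + 1) * p"
  shows "\<lfloor>a / p\<rfloor> = k"
  using assms by (simp add: floor_eq_iff pos_le_divide_eq pos_divide_less_eq)

lemma tent_dom:
  assumes p: "p > 0" and Q: "\<bar>Q\<bar> \<le> p"
    and a: "real_of_int k * p \<le> a" "a \<le> (real_of_int k + 1) * p"
  shows "tent p Q j a \<le> tent p Q k a"
proof (cases "j > k")
  case True
  define jr where "jr = real_of_int j"
  define kr where "kr = real_of_int k"
  have jk: "jr \<ge> kr + 1" using True unfolding jr_def kr_def by linarith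
  have m: "(jr - (kr + 1)) * (Q - p) \<le> 0" using jk Q by (intro mult_nonneg_nonpos) auto
  have "tent p Q j a \<le> jr * Q + (a - jr * p)" unfolding tent_def jr_def by simp
  also have "\<dots> \<le> a + (kr + 1) * (Q - p)" using m by (simp add: algebra_simps)
  also have "\<dots> \<le> tent p Q k a" unfolding tent_def kr_def[symmetric]
    using a Q unfolding kr_def[symmetric] by (simp add: algebra_simps)
  finally show ?thesis .
next
  case False
  show ?thesis
  proof (cases "j = k")
    case True then show ?thesis by simp
  next
    case False
    define jr where "jr = real_of_int j"
    define kr where "kr = real_of_int k"
    have jk: "jr + 1 \<le> kr" using False \<open>\<not> j > k\<close> unfolding jr_def kr_def by linarith
    have m: "(kr - (jr + 1)) * (Q + p) \<ge> 0" using jk Q by (intro mult_nonneg_nonneg) auto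
    have "tent p Q j a \<le> jr * Q + ((jr + 1) * p + Q - a)" unfolding tent_def jr_def by simp
    also have "\<dots> \<le> kr * (Q + p) - a" using m by (simp add: algebra_simps)
    also have "\<dots> \<le> tent p Q k a" unfolding tent_def kr_def[symmetric]
      using a Q unfolding kr_def[symmetric] by (simp add: algebra_simps)
    finally show ?thesis .
  qed
qed

lemma Ut_ge:
  assumes p: "p > 0" and Q: "\<bar>Q\<bar> \<le> p"
  shows "tent p Q j a \<le> Ut p Q a"
  unfolding Ut_def using tent_dom[OF p Q cell(1)[OF p] less_imp_le[OF cell(2)[OF p]]] .

lemma min_lip: "\<bar>min a b - min c d\<bar> \<le> max \<bar>a - c\<bar> \<bar>b - d\<bar>"
  for a b c d :: real by (simp add: min_def max_def abs_if)

lemma tent_lip: "\<bar>tent p Q k a - tent p Q k b\<bar> \<le> \<bar>a - b\<bar>"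
proof -
  have "\<bar>tent p Q k a - tent p Q k b\<bar> = \<bar>min (a - real_of_int k * p) ((real_of_int k + 1) * p + Q - a)
      - min (b - real_of_int k * p) ((real_of_int k + 1) * p + Q - b)\<bar>" unfolding tent_def by simp
  also have "\<dots> \<le> max \<bar>a - real_of_int k * p - (b - real_of_int k * p)\<bar> \<bar>(real_of_int k + 1) * p + Q - a - ((real_of_int k + 1) * p + Q - b)\<bar>"
    by (rule min_lip)
  also have "\<dots> = \<bar>a - b\<bar>" by (simp add: abs_minus_commute)
  finally show ?thesis .
qed

lemma Ut_lip:
  assumes p: "p > 0" and Q: "\<bar>Q\<bar> \<le> p"
  shows "\<bar>Ut p Q a - Ut p Q b\<bar> \<le> \<bar>a - b\<bar>"
proof -
  have 1: "Ut p Q a - Ut p Q b \<le> \<bar>a - b\<bar>" for a b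
  proof -
    have "Ut p Q a - Ut p Q b \<le> tent p Q \<lfloor>a / p\<rfloor> a - tent p Q \<lfloor>a / p\<rfloor> b"
      using Ut_ge[OF p Q, of "\<lfloor>a / p\<rfloor>" b] unfolding Ut_def by simp
    also have "\<dots> \<le> \<bar>a - b\<bar>" using tent_lip[of p Q "\<lfloor>a / p\<rfloor>" a b] by simp
    finally show ?thesis .
  qed
  show ?thesis using 1[of a b] 1[of b a] by (simp add: abs_le_iff abs_minus_commute)
qed

lemma Ut_cont:
  assumes p: "p > 0" and Q: "\<bar>Q\<bar> \<le> p"
  shows "continuous_on UNIV (Ut p Q)"
  unfolding continuous_on_iff
proof (intro ballI allI impI)
  fix a e assume "(0::real) < e"
  then show "\<exists>d>0. \<forall>b\<in>UNIV. dist b a < d \<longrightarrow> dist (Ut p Q b) (Ut p Q a) < e"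
    using Ut_lip[OF p Q] by (intro exI[of _ e]) (auto simp: dist_real_def intro: le_less_trans)
qed

lemma Ut_shift:
  assumes p: "p > 0"
  shows "Ut p Q (a + p) = Ut p Q a + Q"
proof -
  have "(a + p) / p = a / p + 1" using p by (simp add: field_simps)
  then have f: "\<lfloor>(a + p) / p\<rfloor> = \<lfloor>a / p\<rfloor> + 1" by simp
  show ?thesis unfolding Ut_def tent_def f by (simp add: algebra_simps)
qed

lemma Ut_local:
  assumes p: "p > 0" and Q: "\<bar>Q\<bar> \<le> p"
    and a: "real_of_int \<lfloor>a / p\<rfloor> * p < a"
  shows "\<exists>\<sigma>. \<bar>\<sigma>\<bar> = 1 \<and> (\<exists>d>0. \<forall>b. \<bar>b - a\<bar> < d \<longrightarrow> Ut p Q b \<le> Ut p Q a + \<sigma> * (b - a))"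
proof -
  define k where "k = \<lfloor>a / p\<rfloor>"
  have a1: "real_of_int k * p < a" "a < (real_of_int k + 1) * p" using a cell(2)[OF p, of a] unfolding k_def by auto
  define d where "d = min (a - real_of_int k * p) ((real_of_int k + 1) * p - a)"
  have d: "d > 0" unfolding d_def using a1 by simp
  have fb: "\<lfloor>b / p\<rfloor> = k" if "\<bar>b - a\<bar> < d" for b
    using that unfolding d_def by (intro cell_unique[OF p]) (auto simp: abs_less_iff)
  show ?thesis
  proof (cases "a - real_of_int k * p \<le> (real_of_int k + 1) * p + Q - a")
    case True
    have H: "\<forall>b. \<bar>b - a\<bar> < d \<longrightarrow> Ut p Q b \<le> Ut p Q a + 1 * (b - a)"
    proof (intro allI impI)
      fix b assume b: "\<bar>b - a\<bar> < d"
      show "Ut p Q b \<le> Ut p Q a + 1 * (b - a)"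
        unfolding Ut_def fb[OF b] k_def[symmetric] tent_def using True by (simp add: min_def)
    qed
    have "\<bar>1::real\<bar> = 1" by simp
    then show ?thesis using H d by blast
  next
    case False
    have H: "\<forall>b. \<bar>b - a\<bar> < d \<longrightarrow> Ut p Q b \<le> Ut p Q a + (-1) * (b - a)"
    proof (intro allI impI)
      fix b assume b: "\<bar>b - a\<bar> < d"
      show "Ut p Q b \<le> Ut p Q a + (-1) * (b - a)"
        unfolding Ut_def fb[OF b] k_def[symmetric] tent_def using False by (simp add: min_def)
    qed
    have "\<bar>-1::real\<bar> = 1" by simp
    then show ?thesis using H d by blast
  qed
qed

lemma shift_int:
  fixes f :: "real \<Rightarrow> real"
  assumes "\<And>y. f (y + 1) = f y + c"
  shows "f (y + real_of_int k) = f y + real_of_int k * c"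
proof -
  have n: "f (y + real n) = f y + real n * c" for y n
  proof (induct n arbitrary: y)
    case 0 then show ?case by simp
  next
    case (Suc n)
    have "f (y + real (Suc n)) = f ((y + real n) + 1)" by (simp add: add_ac)
    also have "\<dots> = f y + real n * c + c" using assms Suc by simp
    finally show ?case by (simp add: algebra_simps)
  qed
  show ?thesis
  proof (cases "k \<ge> 0")
    case True
    then show ?thesis using n[of y "nat k"] by simp
  next
    case False
    have "f (y + real_of_int k + real (nat (-k))) = f (y + real_of_int k) + real (nat (-k)) * c" by (rule n)
    then show ?thesis using False by (simp add: algebra_simps)
  qed
qed

context pot
begin

definition A :: "real \<Rightarrow> real" where
  "A y = interval_lebesgue_integral lborel (ereal xM) (ereal y) (s M)"

lemma A_deriv: "(A has_real_derivative s M y) (at y)"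
  unfolding A_def by (rule lbint_has_deriv[OF s_cont])

lemma A_cont: "continuous_on UNIV A"
  using A_deriv by (meson DERIV_isCont continuous_at_imp_continuous_on)

lemma A_period: "A (y + 1) = A y + P0"
proof -
  have "(LBINT x=ereal y..ereal (y+1). s M x) = A (y + 1) - A y" by (rule lbint_ftc[OF s_cont A_deriv])
  moreover have "(LBINT x=ereal y..ereal (y+1). s M x) = P0"
    unfolding P0_def F_def by (rule per_period_integral[OF s_cont s_per])
  ultimately show ?thesis by simp
qed

lemma A_mono: "z \<le> y \<Longrightarrow> A z \<le> A y"
proof -
  assume zy: "z \<le> y"
  have "(LBINT x=ereal z..ereal y. s M x) = A y - A z" by (rule lbint_ftc[OF s_cont A_deriv])
  moreover have "(LBINT x=ereal z..ereal y. s M x) = integral {z..y} (s M)" by (rule lbint_eq_integral[OF s_cont zy])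
  moreover have "integral {z..y} (s M) \<ge> 0"
    by (rule integral_nonneg) (auto intro: integrable_cont[OF s_cont] s_nonneg)
  ultimately show ?thesis by simp
qed

lemma A_xM: "A xM = 0" unfolding A_def by simp

lemma A_int: "A (xM + real_of_int k) = real_of_int k * P0"
  using shift_int[of A P0 xM k] A_period A_xM by simp

lemma A_strict:
  assumes sx: "s M x > 0" and eq: "A z = A x"
  shows "z = x"
proof (rule ccontr)
  assume "z \<noteq> x"
  then consider "x < z" | "z < x" by linarith
  then show False
  proof cases
    case 1
    obtain d where d: "d > 0" "\<forall>h>0. h < d \<longrightarrow> A x < A (x + h)" using DERIV_pos_inc_right[OF A_deriv sx] by blast
    define h where "h = min d (z - x) / 2"
    have h: "h > 0" "h < d" "x + h \<le> z" using d 1 unfolding h_def by (auto simp: min_def field_simps)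
    have "A (x + h) \<le> A z" by (rule A_mono) (use h in simp)
    then show False using d(2) h eq by force
  next
    case 2
    obtain d where d: "d > 0" "\<forall>h>0. h < d \<longrightarrow> A (x - h) < A x" using DERIV_pos_inc_left[OF A_deriv sx] by blast
    define h where "h = min d (x - z) / 2"
    have h: "h > 0" "h < d" "z \<le> x - h" using d 2 unfolding h_def by (auto simp: min_def field_simps)
    have "A z \<le> A (x - h)" by (rule A_mono) (use h in simp)
    then show False using d(2) h eq by force
  qed
qed

definition ukink :: "real \<Rightarrow> real \<Rightarrow> real" where
  "ukink Q y = Ut P0 Q (A y) - Q * y"

lemma kink_exists:
  assumes Q: "\<bar>Q\<bar> \<le> P0"
  shows "periodic1 (ukink Q) \<and> visc_sol (\<lambda>x p. (Q + p)\<^sup>2 / 2 + V x - M) (ukink Q)"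
proof -
  let ?u = "ukink Q"
  let ?U = "\<lambda>y. Ut P0 Q (A y)"
  have p: "P0 > 0" by (rule P0_pos)
  have per: "periodic1 ?u" unfolding periodic1_def
  proof
    fix x
    have "?u (x + 1) = Ut P0 Q (A x + P0) - Q * (x + 1)" unfolding ukink_def A_period ..
    also have "\<dots> = Ut P0 Q (A x) + Q - Q * (x + 1)" unfolding Ut_shift[OF p] ..
    also have "\<dots> = ?u x" unfolding ukink_def by (simp add: algebra_simps)
    finally show "?u (x + 1) = ?u x" .
  qed
  have cu: "continuous_on UNIV ?u" unfolding ukink_def
    by (intro continuous_intros continuous_on_compose2[OF Ut_cont[OF p Q] A_cont]) auto
  have lip: "\<bar>?U y - ?U x\<bar> \<le> \<bar>A y - A x\<bar>" for x y using Ut_lip[OF p Q] by blast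
  have sub: "(Q + deriv \<phi> x)\<^sup>2 / 2 + V x - M \<le> 0"
    if C: "C1 \<phi>" and e: "e > 0" "\<forall>y. dist y x < e \<longrightarrow> ?u y - \<phi> y \<le> ?u x - \<phi> x" for \<phi> x e
  proof -
    define \<psi> where "\<psi> y = \<phi> y + Q * y" for y
    have d\<psi>: "(\<psi> has_real_derivative deriv \<phi> x + Q) (at x)"
      unfolding \<psi>_def using C unfolding C1_def by (auto intro!: derivative_eq_intros)
    have key: "\<psi> y - \<psi> x \<ge> ?U y - ?U x" if "\<bar>y - x\<bar> < e" for y
      using e(2)[rule_format, of y] that unfolding ukink_def \<psi>_def by (simp add: dist_real_def algebra_simps)
    have up: "deriv \<phi> x + Q \<le> s M x"
    proof (rule ccontr)
      assume "\<not> ?thesis"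
      then have "0 < deriv \<phi> x + Q - s M x" by simp
      from DERIV_pos_inc_left[OF DERIV_diff[OF d\<psi> A_deriv] this]
      obtain d where d: "d > 0" "\<forall>h>0. h < d \<longrightarrow> \<psi> (x - h) - A (x - h) < \<psi> x - A x" by blast
      define h where "h = min d e / 2"
      have h: "h > 0" "h < d" "\<bar>(x - h) - x\<bar> < e" using d e unfolding h_def by (auto simp: min_def field_simps)
      have "A (x - h) \<le> A x" by (rule A_mono) (use h in simp)
      then have "\<psi> (x - h) - \<psi> x \<ge> A (x - h) - A x"
        using key[OF h(3)] lip[of x "x - h"] by (simp add: abs_le_iff abs_if split: if_splits)
      then show False using d(2) h by force
    qed
    have lo: "- s M x \<le> deriv \<phi> x + Q"
    proof (rule ccontr)
      assume "\<not> ?thesis"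
      then have "deriv \<phi> x + Q + s M x < 0" by simp
      from DERIV_neg_dec_right[OF DERIV_add[OF d\<psi> A_deriv] this]
      obtain d where d: "d > 0" "\<forall>h>0. h < d \<longrightarrow> \<psi> x + A x > \<psi> (x + h) + A (x + h)" by blast
      define h where "h = min d e / 2"
      have h: "h > 0" "h < d" "\<bar>(x + h) - x\<bar> < e" using d e unfolding h_def by (auto simp: min_def field_simps)
      have "A x \<le> A (x + h)" by (rule A_mono) (use h in simp)
      then have "\<psi> (x + h) - \<psi> x \<ge> - (A (x + h) - A x)"
        using key[OF h(3)] lip[of x "x + h"] by (simp add: abs_le_iff abs_if split: if_splits)
      then show False using d(2) h by force
    qed
    have "\<bar>Q + deriv \<phi> x\<bar> \<le> \<bar>s M x\<bar>" using up lo s_nonneg[of M x] by (simp add: abs_le_iff)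
    then have "(Q + deriv \<phi> x)\<^sup>2 \<le> (s M x)\<^sup>2" by (simp add: abs_le_square_iff)
    then show ?thesis using s_sq[of M x] by simp
  qed
  have super: "(Q + deriv \<phi> x)\<^sup>2 / 2 + V x - M \<ge> 0"
    if C: "C1 \<phi>" and e: "e > 0" "\<forall>y. dist y x < e \<longrightarrow> ?u x - \<phi> x \<le> ?u y - \<phi> y" for \<phi> x e
  proof (cases "V x = M")
    case True then show ?thesis by simp
  next
    case False
    then have VM: "V x < M" using M_ge[of x] by simp
    have sx: "s M x > 0" unfolding s_def using VM by simp
    define k where "k = \<lfloor>A x / P0\<rfloor>"
    have "real_of_int k * P0 \<noteq> A x"
    proof
      assume eq: "real_of_int k * P0 = A x"
      then have "A (xM + real_of_int k) = A x" using A_int by simp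
      then have "xM + real_of_int k = x" by (rule A_strict[OF sx])
      then have "V x = M" using per_int[OF Vper, of xM k] unfolding M_def by simp
      then show False using False by simp
    qed
    then have cellx: "real_of_int k * P0 < A x" using cell(1)[OF p, of "A x"] unfolding k_def by simp
    obtain \<sigma> d where \<sigma>: "\<bar>\<sigma>\<bar> = 1" "d > 0" "\<forall>b. \<bar>b - A x\<bar> < d \<longrightarrow> Ut P0 Q b \<le> Ut P0 Q (A x) + \<sigma> * (b - A x)"
      using Ut_local[OF p Q cellx[unfolded k_def]] by blast
    have "isCont A x" using A_deriv by (rule DERIV_isCont)
    then obtain d' where d': "d' > 0" "\<forall>y. dist y x < d' \<longrightarrow> dist (A y) (A x) < d"
      using \<sigma>(2) unfolding continuous_at_eps_delta by blast
    define \<psi> where "\<psi> y = \<phi> y + Q * y" for y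
    have d\<psi>: "(\<psi> has_real_derivative deriv \<phi> x + Q) (at x)"
      unfolding \<psi>_def using C unfolding C1_def by (auto intro!: derivative_eq_intros)
    define g where "g y = \<psi> y - \<sigma> * A y" for y
    have dg: "(g has_real_derivative deriv \<phi> x + Q - \<sigma> * s M x) (at x)"
      unfolding g_def by (intro DERIV_diff d\<psi> DERIV_cmult A_deriv)
    have loc: "\<forall>y. \<bar>x - y\<bar> < min e d' \<longrightarrow> g y \<le> g x"
    proof (intro allI impI)
      fix y assume y: "\<bar>x - y\<bar> < min e d'"
      have "?u x - \<phi> x \<le> ?u y - \<phi> y" using e(2) y by (simp add: dist_real_def abs_minus_commute)
      then have "\<psi> y - \<psi> x \<le> ?U y - ?U x" unfolding ukink_def \<psi>_def by (simp add: algebra_simps)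
      moreover have "\<bar>y - x\<bar> < d'" using y by (simp add: abs_minus_commute)
      then have "\<bar>A y - A x\<bar> < d" using d'(2) by (simp add: dist_real_def)
      then have "?U y \<le> ?U x + \<sigma> * (A y - A x)" using \<sigma>(3) by blast
      ultimately show "g y \<le> g x" unfolding g_def by (simp add: algebra_simps)
    qed
    have "deriv \<phi> x + Q - \<sigma> * s M x = 0" by (rule DERIV_local_max[OF dg _ loc]) (use e d' in simp)
    then have "(Q + deriv \<phi> x)\<^sup>2 = (\<sigma> * s M x)\<^sup>2" by (simp add: algebra_simps)
    also have "\<dots> = (s M x)\<^sup>2" using \<sigma>(1) by (simp add: power_mult_distrib abs_if split: if_splits)
    finally show ?thesis using s_sq[of M x] by (simp add: field_simps)
  qed
  have "visc_sol (\<lambda>x p. (Q + p)\<^sup>2 / 2 + V x - M) ?u"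
    unfolding visc_sol_def visc_sub_def visc_super_def using cu sub super by blast
  then show ?thesis using per by blast
qed

end

context pot
begin

lemma sol_props:
  assumes "periodic1 u" "visc_sol (\<lambda>x p. (Q + p)\<^sup>2 / 2 + V x - c) u"
  shows "M \<le> c" "M < c \<Longrightarrow> F c = \<bar>Q\<bar>" "c = M \<Longrightarrow> \<bar>Q\<bar> \<le> P0"
proof -
  have sub: "visc_sub (\<lambda>x p. (Q + p)\<^sup>2 / 2 + V x - c) u"
   and sup: "visc_super (\<lambda>x p. (Q + p)\<^sup>2 / 2 + V x - c) u" using assms(2) unfolding visc_sol_def by auto
  show cM: "M \<le> c" by (rule sub_ge_M[OF sub assms(1)])
  show "F c = \<bar>Q\<bar>" if "M < c"
  proof -
    have "\<not> F c < \<bar>Q\<bar>" using sub_too_big[OF sub assms(1) cM] by blast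
    moreover have "\<not> \<bar>Q\<bar> < F c" using super_too_small[OF sup assms(1) that] by blast
    ultimately show ?thesis by simp
  qed
  show "\<bar>Q\<bar> \<le> P0" if "c = M"
  proof -
    have "\<not> F c < \<bar>Q\<bar>" using sub_too_big[OF sub assms(1) cM] by blast
    then show ?thesis using that unfolding P0_def by simp
  qed
qed

lemma effH_small:
  assumes Q: "\<bar>Q\<bar> \<le> P0"
  shows "effH V Q = M"
  unfolding effH_def
proof (rule the_equality)
  show "\<exists>\<phi>. periodic1 \<phi> \<and> visc_sol (\<lambda>x p. (Q + p)\<^sup>2 / 2 + V x - M) \<phi>"
    using kink_exists[OF Q] by blast
next
  fix c assume "\<exists>\<phi>. periodic1 \<phi> \<and> visc_sol (\<lambda>x p. (Q + p)\<^sup>2 / 2 + V x - c) \<phi>"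
  then obtain u where u: "periodic1 u" "visc_sol (\<lambda>x p. (Q + p)\<^sup>2 / 2 + V x - c) u" by blast
  have cM: "M \<le> c" by (rule sol_props(1)[OF u])
  show "c = M"
  proof (rule ccontr)
    assume "c \<noteq> M"
    then have "M < c" using cM by simp
    then have "F c = \<bar>Q\<bar>" "P0 < F c" using sol_props(2)[OF u] F_strict[of M c] unfolding P0_def by auto
    then show False using Q by simp
  qed
qed

lemma effH_big:
  assumes Q: "P0 < \<bar>Q\<bar>"
  shows "M < effH V Q \<and> F (effH V Q) = \<bar>Q\<bar>"
proof -
  obtain c where c: "M < c" "F c = \<bar>Q\<bar>" using F_hits[OF Q] by blast
  have "effH V Q = c"
    unfolding effH_def
  proof (rule the_equality)
    show "\<exists>\<phi>. periodic1 \<phi> \<and> visc_sol (\<lambda>x p. (Q + p)\<^sup>2 / 2 + V x - c) \<phi>"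
      using classical_exists[of c Q] c by auto
  next
    fix c' assume "\<exists>\<phi>. periodic1 \<phi> \<and> visc_sol (\<lambda>x p. (Q + p)\<^sup>2 / 2 + V x - c') \<phi>"
    then obtain u where u: "periodic1 u" "visc_sol (\<lambda>x p. (Q + p)\<^sup>2 / 2 + V x - c') u" by blast
    have cM: "M \<le> c'" by (rule sol_props(1)[OF u])
    have "c' \<noteq> M" using sol_props(3)[OF u] Q by auto
    then have c'M: "M < c'" using cM by simp
    have Fc': "F c' = \<bar>Q\<bar>" using sol_props(2)[OF u c'M] .
    show "c' = c"
    proof (rule ccontr)
      assume "c' \<noteq> c"
      then consider "c' < c" | "c < c'" by linarith
      then show False
      proof cases
        case 1 then show False using F_strict[of c' c] c'M c Fc' by simp
      next
        case 2 then show False using F_strict[of c c'] c'M c Fc' by simp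
      qed
    qed
  qed
  then show ?thesis using c by simp
qed

lemma effH_ge: "M \<le> effH V Q"
  using effH_small[of Q] effH_big[of Q] by (cases "\<bar>Q\<bar> \<le> P0") auto

lemma Pcrit_eq: "Pcrit V = P0"
proof -
  have infr: "Inf (range (effH V)) = M"
  proof (rule cInf_eq_minimum)
    have "effH V 0 = M" using effH_small[of 0] P0_nonneg by simp
    then show "M \<in> range (effH V)" by (metis rangeI)
  qed (use effH_ge in auto)
  have set: "{P. 0 \<le> P \<and> effH V P > Inf (range (effH V))} = {P0<..}"
  proof (intro set_eqI iffI)
    fix P assume "P \<in> {P. 0 \<le> P \<and> effH V P > Inf (range (effH V))}"
    then have P: "0 \<le> P" "effH V P > M" using infr by auto
    show "P \<in> {P0<..}"
    proof (rule ccontr)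
      assume "P \<notin> {P0<..}"
      then have "\<bar>P\<bar> \<le> P0" using P by simp
      then show False using effH_small[of P] P by simp
    qed
  next
    fix P assume "P \<in> {P0<..}"
    then have P: "P0 < \<bar>P\<bar>" "0 \<le> P" using P0_nonneg by auto
    then show "P \<in> {P. 0 \<le> P \<and> effH V P > Inf (range (effH V))}"
      using effH_big[OF P(1)] infr by simp
  qed
  show ?thesis unfolding Pcrit_def set by simp
qed

end

locale mainloc = pot V for V :: "real \<Rightarrow> real" +
  fixes P :: real and vh :: "real \<Rightarrow> real \<Rightarrow> real" and v :: "nat \<Rightarrow> real \<Rightarrow> real" and N :: nat
  assumes P_gt: "P > Pcrit V"
    and vh_reg: "\<forall>h>0. (\<forall>x. (vh h has_real_derivative deriv (vh h) x) (at x)) \<and>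
                        (\<forall>x. (deriv (vh h) has_real_derivative deriv (deriv (vh h)) x) (at x))"
    and vh_per: "\<forall>h>0. periodic1 (vh h)"
    and vh_eq: "\<forall>h>0. \<exists>c. \<forall>x. - (h / 2) * deriv (deriv (vh h)) x
                              + (P + deriv (vh h) x)\<^sup>2 / 2 + V x = c"
    and v_0: "v 0 = v0 V P"
    and v_smooth: "\<forall>j\<ge>1. smooth (v j) \<and> periodic1 (v j)"
    and v_eq: "\<forall>j\<ge>1. \<forall>x. - (1/2) * deriv (deriv (v (j - 1))) x + pplus V P x * deriv (v j) x
                   + (1/2) * (\<Sum>i=1..j-1. deriv (v i) x * deriv (v (j - i)) x) = Hbar_j V P v j"
begin

definition c0 where "c0 = effH V P"

lemma P0P: "P0 < P" using P_gt Pcrit_eq by simp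
lemma Ppos: "0 < P" using P0P P0_nonneg by simp

lemma c0: "M < c0" "F c0 = P"
  using effH_big[of P] P0P Ppos unfolding c0_def by auto

lemma pp_eq: "pplus V P = s c0"
  unfolding pplus_def s_def c0_def by auto

lemma pp_pos: "0 < s c0 x"
  using c0(1) M_ge[of x] unfolding s_def by simp

definition ppd where "ppd x = - deriv V x / s c0 x"

lemma pp_deriv: "(s c0 has_real_derivative ppd x) (at x)"
proof -
  have pos: "0 < 2 * (c0 - V x)" using c0(1) M_ge[of x] by simp
  have "((\<lambda>x. sqrt (2 * (c0 - V x))) has_real_derivative
      inverse (sqrt (2 * (c0 - V x))) / 2 * (2 * (0 - deriv V x))) (at x)"
  proof -
    have g: "((\<lambda>x. 2 * (c0 - V x)) has_real_derivative 2 * (0 - deriv V x)) (at x)"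
      by (intro DERIV_cmult DERIV_diff DERIV_const V_deriv)
    show ?thesis by (rule DERIV_chain2[OF DERIV_real_sqrt[OF pos] g])
  qed
  moreover have "inverse (sqrt (2 * (c0 - V x))) / 2 * (2 * (0 - deriv V x)) = ppd x"
    unfolding ppd_def s_def by (simp add: field_simps)
  ultimately show ?thesis unfolding s_def by simp
qed

lemma ppd_cont: "continuous_on UNIV ppd"
  unfolding ppd_def using pp_pos by (intro continuous_intros contdV s_cont) (auto simp: less_imp_neq[symmetric])

lemma ppd_per: "periodic1 ppd"
  using per_deriv[OF Vper] s_per unfolding ppd_def periodic1_def by simp

lemma v0_deriv: "(v 0 has_real_derivative s c0 x - P) (at x)"
proof -
  have "((\<lambda>x. interval_lebesgue_integral lborel (ereal (-1/2)) (ereal x) (s c0) - P * (x + 1/2))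
     has_real_derivative s c0 x - P * (1 + 0)) (at x)"
    by (intro DERIV_diff lbint_has_deriv[OF s_cont] DERIV_cmult DERIV_add DERIV_ident DERIV_const)
  then show ?thesis unfolding v_0 v0_def[abs_def] pp_eq by simp
qed

lemma dv0: "deriv (v 0) = (\<lambda>x. s c0 x - P)"
  using v0_deriv by (intro ext DERIV_imp_deriv)

lemma ddv0: "deriv (deriv (v 0)) x = ppd x"
proof -
  have "((\<lambda>x. s c0 x - P) has_real_derivative ppd x - 0) (at x)" by (intro DERIV_diff pp_deriv DERIV_const)
  then show ?thesis unfolding dv0 by (intro DERIV_imp_deriv) simp
qed

lemma vj_facts:
  assumes "1 \<le> j"
  shows "(v j has_real_derivative deriv (v j) x) (at x)"
    "(deriv (v j) has_real_derivative deriv (deriv (v j)) x) (at x)"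
    "(deriv (deriv (v j)) has_real_derivative deriv (deriv (deriv (v j))) x) (at x)"
    "periodic1 (v j)"
proof -
  have sm: "smooth (v j)" and pv: "periodic1 (v j)" using v_smooth assms by auto
  have "((deriv^^0) (v j) has_real_derivative (deriv^^Suc 0) (v j) x) (at x)" using sm unfolding smooth_def by blast
  then show "(v j has_real_derivative deriv (v j) x) (at x)" by simp
  have "((deriv^^Suc 0) (v j) has_real_derivative (deriv^^Suc (Suc 0)) (v j) x) (at x)" using sm unfolding smooth_def by blast
  then show "(deriv (v j) has_real_derivative deriv (deriv (v j)) x) (at x)" by simp
  have "((deriv^^Suc (Suc 0)) (v j) has_real_derivative (deriv^^Suc (Suc (Suc 0))) (v j) x) (at x)" using sm unfolding smooth_def by blast
  then show "(deriv (deriv (v j)) has_real_derivative deriv (deriv (deriv (v j))) x) (at x)" by simp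
  show "periodic1 (v j)" by (rule pv)
qed

definition r :: "nat \<Rightarrow> real \<Rightarrow> real" where
  "r j x = (if j = 0 then s c0 x else deriv (v j) x)"
definition rd :: "nat \<Rightarrow> real \<Rightarrow> real" where
  "rd j x = (if j = 0 then ppd x else deriv (deriv (v j)) x)"

lemma r_deriv: "(r j has_real_derivative rd j x) (at x)"
proof (cases "j = 0")
  case True
  then show ?thesis unfolding r_def[abs_def] rd_def using pp_deriv by simp
next
  case False
  then show ?thesis unfolding r_def[abs_def] rd_def using vj_facts(2)[of j] by simp
qed

lemma r_cont: "continuous_on UNIV (r j)"
  using r_deriv by (meson DERIV_isCont continuous_at_imp_continuous_on)

lemma rd_cont: "continuous_on UNIV (rd j)"
proof (cases "j = 0")
  case True
  then show ?thesis unfolding rd_def[abs_def] using ppd_cont by simp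
next
  case False
  then have "continuous_on UNIV (deriv (deriv (v j)))"
    using vj_facts(3)[of j] by (meson DERIV_isCont continuous_at_imp_continuous_on less_one not_le)
  then show ?thesis unfolding rd_def[abs_def] using False by simp
qed

lemma r_per: "periodic1 (r j)"
proof (cases "j = 0")
  case True then show ?thesis unfolding r_def[abs_def] using s_per by simp
next
  case False then show ?thesis unfolding r_def[abs_def] using per_deriv[OF vj_facts(4)[of j]] by simp
qed

lemma rd_per: "periodic1 (rd j)"
proof (cases "j = 0")
  case True then show ?thesis unfolding rd_def[abs_def] using ppd_per by simp
next
  case False then show ?thesis unfolding rd_def[abs_def] using per_deriv[OF per_deriv[OF vj_facts(4)[of j]]] by simp
qed

lemma bounds: "\<exists>B\<ge>0. \<forall>j\<le>N. \<forall>x. \<bar>r j x\<bar> \<le> B \<and> \<bar>rd j x\<bar> \<le> B"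
proof -
  have "\<forall>j. \<exists>B. \<forall>x. \<bar>r j x\<bar> \<le> B \<and> \<bar>rd j x\<bar> \<le> B"
  proof
    fix j
    obtain B1 where "\<forall>x. \<bar>r j x\<bar> \<le> B1" using per_bounded[OF r_cont r_per] by blast
    moreover obtain B2 where "\<forall>x. \<bar>rd j x\<bar> \<le> B2" using per_bounded[OF rd_cont rd_per] by blast
    ultimately show "\<exists>B. \<forall>x. \<bar>r j x\<bar> \<le> B \<and> \<bar>rd j x\<bar> \<le> B"
      by (intro exI[of _ "max B1 B2"]) (auto simp: le_max_iff_disj)
  qed
  then obtain Bf where Bf: "\<forall>j x. \<bar>r j x\<bar> \<le> Bf j \<and> \<bar>rd j x\<bar> \<le> Bf j" by metis
  define B where "B = (\<Sum>j\<le>N. \<bar>Bf j\<bar>)"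
  have "\<bar>Bf j\<bar> \<le> B" if "j \<le> N" for j
    unfolding B_def using that by (intro member_le_sum) auto
  then have "\<forall>j\<le>N. \<forall>x. \<bar>r j x\<bar> \<le> B \<and> \<bar>rd j x\<bar> \<le> B"
    using Bf by (meson abs_ge_self order_trans)
  moreover have "B \<ge> 0" unfolding B_def by (simp add: sum_nonneg)
  ultimately show ?thesis by blast
qed

lemma dv: "deriv (v j) x = r j x - (if j = 0 then P else 0)"
  unfolding r_def using dv0 by simp

lemma ddv: "deriv (deriv (v j)) x = rd j x"
  unfolding rd_def using ddv0 by simp

end

context mainloc
begin

definition Hk where "Hk k = Hbar_j V P v k"
definition Qh where "Qh h x = (\<Sum>j=0..N. h ^ j * r j x)"
definition Qd where "Qd h x = (\<Sum>j=0..N. h ^ j * rd j x)"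
definition Hi where "Hi = {(i, j). i \<le> N \<and> j \<le> N \<and> N < i + j}"
definition Rem where "Rem h x = - (1/2) * h ^ (N + 1) * rd N x
   + (1/2) * (\<Sum>p\<in>Hi. h ^ (fst p + snd p) * (r (fst p) x * r (snd p) x))"

lemma v_deriv_all: "(v j has_real_derivative deriv (v j) x) (at x)"
proof (cases "j = 0")
  case True then show ?thesis using v0_deriv dv0 by simp
next
  case False then show ?thesis using vj_facts(1)[of j] by simp
qed

lemma sum_dv: "(\<Sum>j=0..N. h ^ j * deriv (v j) x) = Qh h x - P"
proof -
  have "(\<Sum>j=0..N. h ^ j * deriv (v j) x) = (\<Sum>j=0..N. h ^ j * r j x - (if j = 0 then P else 0))"
    by (rule sum.cong) (auto simp: dv)
  also have "\<dots> = Qh h x - (\<Sum>j=0..N. (if j = 0 then P else 0))" unfolding Qh_def sum_subtractf ..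
  also have "(\<Sum>j=0..N. (if j = 0 then P else 0)) = P" by (simp add: sum.delta)
  finally show ?thesis .
qed

lemma vhat_deriv: "(vhat v N h has_real_derivative Qh h x - P) (at x)"
proof -
  have "((\<lambda>x. \<Sum>j=0..N. h ^ j * v j x) has_real_derivative (\<Sum>j=0..N. h ^ j * deriv (v j) x)) (at x)"
    by (intro DERIV_sum DERIV_cmult v_deriv_all)
  then show ?thesis unfolding vhat_def[abs_def] sum_dv .
qed

lemma deriv_vhat: "deriv (vhat v N h) x = Qh h x - P"
  by (rule DERIV_imp_deriv[OF vhat_deriv])

lemma Qh_deriv: "(Qh h has_real_derivative Qd h x) (at x)"
  unfolding Qh_def[abs_def] Qd_def by (intro DERIV_sum DERIV_cmult r_deriv)

lemma Qh_cont: "continuous_on UNIV (Qh h)"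
  using Qh_deriv by (meson DERIV_isCont continuous_at_imp_continuous_on)

lemma Qh_per: "periodic1 (Qh h)"
  using r_per unfolding Qh_def[abs_def] periodic1_def by simp

lemma veq_k:
  assumes k: "1 \<le> k"
  shows "- (1/2) * rd (k - 1) x + (1/2) * (\<Sum>i\<le>k. r i x * r (k - i) x) = Hk k"
proof -
  have e: "- (1/2) * deriv (deriv (v (k - 1))) x + pplus V P x * deriv (v k) x
       + (1/2) * (\<Sum>i=1..k-1. deriv (v i) x * deriv (v (k - i)) x) = Hk k"
    using v_eq k unfolding Hk_def by blast
  have s1: "(\<Sum>i=1..k-1. deriv (v i) x * deriv (v (k - i)) x) = (\<Sum>i=1..k-1. r i x * r (k - i) x)"
    by (rule sum.cong) (auto simp: dv)
  have set: "{..k} = insert 0 (insert k {1..k-1})" using k by auto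
  define g where "g i = r i x * r (k - i) x" for i
  have i1: "sum g (insert 0 (insert k {1..k-1})) = g 0 + sum g (insert k {1..k-1})"
    by (rule sum.insert) (use k in auto)
  have i2: "sum g (insert k {1..k-1}) = g k + sum g {1..k-1}"
    by (rule sum.insert) auto
  have "(\<Sum>i\<le>k. r i x * r (k - i) x) = r 0 x * r k x + (r k x * r 0 x + (\<Sum>i=1..k-1. r i x * r (k - i) x))"
    using i1 i2 unfolding set g_def by simp
  moreover have "r 0 x = s c0 x" by (simp add: r_def)
  then have "pplus V P x * deriv (v k) x = r 0 x * r k x" using k by (simp add: pp_eq dv)
  ultimately show ?thesis using e s1 by (simp add: ddv algebra_simps)
qed

lemma sq_expand: "(Qh h x)\<^sup>2 = (\<Sum>k\<le>N. h ^ k * (\<Sum>i\<le>k. r i x * r (k - i) x))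
    + (\<Sum>p\<in>Hi. h ^ (fst p + snd p) * (r (fst p) x * r (snd p) x))"
proof -
  define f where "f i j = h ^ (i + j) * (r i x * r j x)" for i j
  have "(Qh h x)\<^sup>2 = (\<Sum>i\<le>N. \<Sum>j\<le>N. h ^ i * r i x * (h ^ j * r j x))"
    unfolding Qh_def power2_eq_square sum_product atLeast0AtMost by simp
  also have "\<dots> = (\<Sum>i\<le>N. \<Sum>j\<le>N. f i j)" unfolding f_def by (simp add: power_add algebra_simps)
  also have "\<dots> = (\<Sum>p\<in>{..N} \<times> {..N}. f (fst p) (snd p))" by (simp add: sum.cartesian_product case_prod_beta')
  also have "{..N} \<times> {..N} = {(i, j). i + j \<le> N} \<union> Hi" unfolding Hi_def by auto
  also have "(\<Sum>p\<in>{(i, j). i + j \<le> N} \<union> Hi. f (fst p) (snd p))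
      = (\<Sum>p\<in>{(i, j). i + j \<le> N}. f (fst p) (snd p)) + (\<Sum>p\<in>Hi. f (fst p) (snd p))"
  proof (rule sum.union_disjoint)
    show "finite {(i, j). i + j \<le> N}"
      by (rule finite_subset[of _ "{..N} \<times> {..N}"]) auto
    show "finite Hi" unfolding Hi_def by (rule finite_subset[of _ "{..N} \<times> {..N}"]) auto
  qed (auto simp: Hi_def)
  also have "(\<Sum>p\<in>{(i, j). i + j \<le> N}. f (fst p) (snd p)) = (\<Sum>(i, j)\<in>{(i, j). i + j \<le> N}. f i j)"
    by (simp add: case_prod_beta')
  also have "\<dots> = (\<Sum>k\<le>N. \<Sum>i\<le>k. f i (k - i))" by (rule sum.triangle_reindex_eq)
  also have "\<dots> = (\<Sum>k\<le>N. h ^ k * (\<Sum>i\<le>k. r i x * r (k - i) x))"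
    unfolding f_def by (intro sum.cong refl) (simp add: sum_distrib_left)
  finally show ?thesis unfolding f_def by simp
qed

lemma deriv_term: "(\<Sum>j=0..N. h ^ j * rd j x) * h = (\<Sum>k=1..N. h ^ k * rd (k - 1) x) + h ^ (N + 1) * rd N x"
proof -
  have "(\<Sum>j=0..N. h ^ j * rd j x) * h = (\<Sum>j=0..N. h ^ Suc j * rd (Suc j - 1) x)"
    unfolding sum_distrib_right by (intro sum.cong) auto
  also have "\<dots> = (\<Sum>k=Suc 0..Suc N. h ^ k * rd (k - 1) x)" by (rule sum.shift_bounds_cl_Suc_ivl[symmetric])
  also have "\<dots> = (\<Sum>k=1..N. h ^ k * rd (k - 1) x) + h ^ (N + 1) * rd N x" by simp
  finally show ?thesis .
qed

lemma E_ident: "- (h / 2) * Qd h x + (Qh h x)\<^sup>2 / 2 + V x = c0 + (\<Sum>k=1..N. h ^ k * Hk k) + Rem h x"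
proof -
  define L where "L k = (\<Sum>i\<le>k. r i x * r (k - i) x)" for k
  define D where "D = (\<Sum>k=1..N. h ^ k * rd (k - 1) x)"
  define Ls where "Ls = (\<Sum>k=1..N. h ^ k * L k)"
  define Hs where "Hs = (\<Sum>p\<in>Hi. h ^ (fst p + snd p) * (r (fst p) x * r (snd p) x))"
  define T where "T = h ^ (N + 1) * rd N x"
  have L0: "L 0 = 2 * (c0 - V x)" unfolding L_def using s_sq[of c0 x] c0(1)
    by (simp add: r_def power2_eq_square)
  have split: "(\<Sum>k\<le>N. h ^ k * L k) = L 0 + Ls"
  proof -
    have "{..N} = insert 0 {1..N}" by auto
    moreover have "sum (\<lambda>k. h ^ k * L k) (insert 0 {1..N}) = h ^ 0 * L 0 + sum (\<lambda>k. h ^ k * L k) {1..N}"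
      by (rule sum.insert) auto
    ultimately show ?thesis unfolding Ls_def by simp
  qed
  have "(\<Sum>k=1..N. h ^ k * Hk k) = (\<Sum>k=1..N. (1/2) * (h ^ k * L k) - (1/2) * (h ^ k * rd (k - 1) x))"
    by (rule sum.cong) (use veq_k in \<open>auto simp: L_def algebra_simps\<close>)
  also have "\<dots> = (1/2) * Ls - (1/2) * D" unfolding Ls_def D_def sum_subtractf sum_distrib_left ..
  finally have co: "(\<Sum>k=1..N. h ^ k * Hk k) = (1/2) * Ls - (1/2) * D" .
  have "- (h / 2) * Qd h x = - (1/2) * ((\<Sum>j=0..N. h ^ j * rd j x) * h)" unfolding Qd_def by (simp add: algebra_simps)
  then have d: "- (h / 2) * Qd h x = - (1/2) * (D + T)" unfolding deriv_term D_def T_def .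
  have q: "(Qh h x)\<^sup>2 = L 0 + Ls + Hs"
    using sq_expand[of h x] split unfolding L_def Hs_def by simp
  have R: "Rem h x = - (1/2) * T + (1/2) * Hs" unfolding Rem_def T_def Hs_def by simp
  show ?thesis unfolding co R d q L0 by (simp add: field_simps)
qed

end

context mainloc
begin

lemma Rem_bound: "\<exists>KR\<ge>0. \<forall>h x. 0 < h \<longrightarrow> h \<le> 1 \<longrightarrow> \<bar>Rem h x\<bar> \<le> KR * h ^ (N + 1)"
proof -
  obtain B where B: "B \<ge> 0" "\<forall>j\<le>N. \<forall>x. \<bar>r j x\<bar> \<le> B \<and> \<bar>rd j x\<bar> \<le> B" using bounds by blast
  define KR where "KR = B / 2 + real (card Hi) * B\<^sup>2 / 2"
  have KR: "KR \<ge> 0" unfolding KR_def using B(1) by simp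
  have fin: "finite Hi" unfolding Hi_def by (rule finite_subset[of _ "{..N} \<times> {..N}"]) auto
  have "\<bar>Rem h x\<bar> \<le> KR * h ^ (N + 1)" if h: "0 < h" "h \<le> 1" for h x
  proof -
    have t: "\<bar>h ^ (fst p + snd p) * (r (fst p) x * r (snd p) x)\<bar> \<le> h ^ (N + 1) * B\<^sup>2" if p: "p \<in> Hi" for p
    proof -
      have pp: "fst p \<le> N" "snd p \<le> N" "N + 1 \<le> fst p + snd p" using p unfolding Hi_def by auto
      have "h ^ (fst p + snd p) \<le> h ^ (N + 1)" by (rule power_decreasing) (use pp h in auto)
      moreover have "\<bar>r (fst p) x * r (snd p) x\<bar> \<le> B * B"
        unfolding abs_mult by (rule mult_mono) (use B pp in auto)
      ultimately have "h ^ (fst p + snd p) * \<bar>r (fst p) x * r (snd p) x\<bar> \<le> h ^ (N + 1) * (B * B)"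
        using h by (intro mult_mono) auto
      then show ?thesis using h by (simp add: abs_mult power2_eq_square)
    qed
    have "\<bar>\<Sum>p\<in>Hi. h ^ (fst p + snd p) * (r (fst p) x * r (snd p) x)\<bar> \<le> (\<Sum>p\<in>Hi. h ^ (N + 1) * B\<^sup>2)"
      by (rule order_trans[OF sum_abs sum_mono]) (rule t)
    also have "\<dots> = real (card Hi) * (h ^ (N + 1) * B\<^sup>2)" by simp
    finally have hs: "\<bar>\<Sum>p\<in>Hi. h ^ (fst p + snd p) * (r (fst p) x * r (snd p) x)\<bar> \<le> real (card Hi) * (h ^ (N + 1) * B\<^sup>2)" .
    have "h ^ (N + 1) * \<bar>rd N x\<bar> \<le> h ^ (N + 1) * B" using B h by (intro mult_left_mono) auto
    then have rn: "\<bar>h ^ (N + 1) * rd N x\<bar> \<le> h ^ (N + 1) * B" using h by (simp add: abs_mult)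
    have "\<bar>Rem h x\<bar> \<le> \<bar>- (1/2) * h ^ (N + 1) * rd N x\<bar> + \<bar>(1/2) * (\<Sum>p\<in>Hi. h ^ (fst p + snd p) * (r (fst p) x * r (snd p) x))\<bar>"
      unfolding Rem_def by (rule abs_triangle_ineq)
    also have "\<dots> = (1/2) * \<bar>h ^ (N + 1) * rd N x\<bar> + (1/2) * \<bar>\<Sum>p\<in>Hi. h ^ (fst p + snd p) * (r (fst p) x * r (snd p) x)\<bar>"
      by (simp add: abs_mult)
    also have "\<dots> \<le> (1/2) * (h ^ (N + 1) * B) + (1/2) * (real (card Hi) * (h ^ (N + 1) * B\<^sup>2))"
      using rn hs by simp
    also have "\<dots> = KR * h ^ (N + 1)" unfolding KR_def by (simp add: algebra_simps)
    finally show ?thesis .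
  qed
  then show ?thesis using KR by blast
qed

lemma CH_bound: "\<exists>KH\<ge>0. \<forall>h. 0 < h \<longrightarrow> h \<le> 1 \<longrightarrow> \<bar>\<Sum>k=1..N. h ^ k * Hk k\<bar> \<le> KH * h"
proof -
  define KH where "KH = (\<Sum>k=1..N. \<bar>Hk k\<bar>)"
  have "\<bar>\<Sum>k=1..N. h ^ k * Hk k\<bar> \<le> KH * h" if h: "0 < h" "h \<le> 1" for h
  proof -
    have "\<bar>\<Sum>k=1..N. h ^ k * Hk k\<bar> \<le> (\<Sum>k=1..N. h * \<bar>Hk k\<bar>)"
    proof (rule order_trans[OF sum_abs sum_mono])
      fix k assume k: "k \<in> {1..N}"
      have "h ^ k \<le> h ^ 1" by (rule power_decreasing) (use k h in auto)
      then have "h ^ k * \<bar>Hk k\<bar> \<le> h * \<bar>Hk k\<bar>" by (intro mult_right_mono) auto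
      then show "\<bar>h ^ k * Hk k\<bar> \<le> h * \<bar>Hk k\<bar>" using h by (simp add: abs_mult)
    qed
    also have "\<dots> = KH * h" unfolding KH_def by (simp add: sum_distrib_left mult.commute)
    finally show ?thesis .
  qed
  moreover have "KH \<ge> 0" unfolding KH_def by (simp add: sum_nonneg)
  ultimately show ?thesis by blast
qed

lemma Qh_lower: "\<exists>a>0. \<exists>h1>0. h1 \<le> 1 \<and> (\<forall>h x. 0 < h \<longrightarrow> h \<le> h1 \<longrightarrow> a \<le> Qh h x)"
proof -
  obtain B where B: "B \<ge> 0" "\<forall>j\<le>N. \<forall>x. \<bar>r j x\<bar> \<le> B \<and> \<bar>rd j x\<bar> \<le> B" using bounds by blast
  obtain xm where xm: "\<forall>x. s c0 xm \<le> s c0 x" using per_min[OF s_cont s_per] by blast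
  define pm where "pm = s c0 xm"
  have pm: "pm > 0" unfolding pm_def by (rule pp_pos)
  define h1 where "h1 = min 1 (pm / (2 * (real N * B + 1)))"
  have "0 < real N * B + 1" using B by (simp add: add_nonneg_pos)
  then have "0 < pm / (2 * (real N * B + 1))" using pm by simp
  then have h1: "h1 > 0" "h1 \<le> 1" unfolding h1_def by auto
  have "pm / 2 \<le> Qh h x" if h: "0 < h" "h \<le> h1" for h x
  proof -
    have "Qh h x = r 0 x + (\<Sum>j=1..N. h ^ j * r j x)"
    proof -
      have "{0..N} = insert 0 {1..N}" by auto
      moreover have "sum (\<lambda>j. h ^ j * r j x) (insert 0 {1..N}) = h ^ 0 * r 0 x + sum (\<lambda>j. h ^ j * r j x) {1..N}"
        by (rule sum.insert) auto
      ultimately show ?thesis unfolding Qh_def by simp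
    qed
    moreover have "\<bar>\<Sum>j=1..N. h ^ j * r j x\<bar> \<le> real N * (h * B)"
    proof -
      have "\<bar>\<Sum>j=1..N. h ^ j * r j x\<bar> \<le> (\<Sum>j=1..N. h * B)"
      proof (rule order_trans[OF sum_abs sum_mono])
        fix j assume j: "j \<in> {1..N}"
        have "h ^ j \<le> h ^ 1" by (rule power_decreasing) (use j h h1 in auto)
        moreover have "\<bar>r j x\<bar> \<le> B" using B j by auto
        ultimately have "h ^ j * \<bar>r j x\<bar> \<le> h * B" using h by (intro mult_mono) auto
        then show "\<bar>h ^ j * r j x\<bar> \<le> h * B" using h by (simp add: abs_mult)
      qed
      then show ?thesis by simp
    qed
    moreover have "real N * (h * B) \<le> pm / 2"
    proof -
      have "h \<le> pm / (2 * (real N * B + 1))" using h unfolding h1_def by simp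
      moreover have "0 < 2 * (real N * B + 1)" using B by (simp add: add_nonneg_pos)
      ultimately have "h * (2 * (real N * B + 1)) \<le> pm" by (simp only: pos_le_divide_eq)
      then have "2 * (real N * (h * B)) \<le> pm" using h B by (simp add: algebra_simps)
      then show ?thesis by simp
    qed
    moreover have "r 0 x \<ge> pm" unfolding r_def pm_def using xm by simp
    ultimately show ?thesis by (simp add: abs_le_iff)
  qed
  then show ?thesis using pm h1 by (intro exI[of _ "pm / 2"]) auto
qed

end

lemma stay_nonpos:
  fixes q qd :: "real \<Rightarrow> real"
  assumes dq: "\<And>x. (q has_real_derivative qd x) (at x)"
    and neg: "\<And>t. q t = 0 \<Longrightarrow> qd t < 0"
    and x1: "q x1 \<le> 0" and y: "x1 \<le> y"
  shows "q y \<le> 0"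
proof (rule ccontr)
  assume "\<not> q y \<le> 0"
  then have qy: "q y > 0" by simp
  have cq: "continuous_on UNIV q" using dq by (meson DERIV_isCont continuous_at_imp_continuous_on)
  define S where "S = {x1..y} \<inter> {t. q t \<le> (\<lambda>_. 0) t}"
  have "closed {t. q t \<le> (\<lambda>_. 0) t}" by (rule closed_Collect_le[OF cq continuous_on_const])
  then have cS: "compact S" unfolding S_def by (intro compact_Int_closed compact_Icc)
  have "x1 \<in> S" unfolding S_def using x1 y by simp
  then obtain t0 where t0: "t0 \<in> S" "\<forall>t\<in>S. t \<le> t0" using compact_attains_sup[OF cS] by blast
  have t0b: "x1 \<le> t0" "t0 \<le> y" "q t0 \<le> 0" using t0(1) unfolding S_def by auto
  have cq': "continuous_on {t0..y} q" using cq continuous_on_subset by blast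
  obtain t where t: "t0 \<le> t" "t \<le> y" "q t = 0" using IVT'[of q t0 0 y, OF t0b(3) less_imp_le[OF qy] t0b(2) cq'] by blast
  have "t \<in> S" unfolding S_def using t t0b by simp
  then have "t = t0" using t0(2) t(1) by force
  then have qt0: "q t0 = 0" using t by simp
  have "t0 < y" using qt0 qy t0b by (cases "t0 = y") auto
  obtain d where d: "d > 0" "\<forall>h>0. h < d \<longrightarrow> q t0 > q (t0 + h)" using DERIV_neg_dec_right[OF dq neg[OF qt0]] by blast
  define e where "e = min d (y - t0) / 2"
  have e: "e > 0" "e < d" "t0 + e \<le> y" using d \<open>t0 < y\<close> unfolding e_def by (auto simp: min_def field_simps)
  have "t0 + e \<in> S" unfolding S_def using e d(2) qt0 t0b by (auto simp: less_imp_le)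
  then show False using t0(2) e by force
qed

context mainloc
begin

lemma w_bound:
  assumes a: "a > 0" "\<forall>h x. 0 < h \<longrightarrow> h \<le> h1 \<longrightarrow> a \<le> Qh h x"
    and KR: "KR \<ge> 0" "\<forall>h x. 0 < h \<longrightarrow> h \<le> 1 \<longrightarrow> \<bar>Rem h x\<bar> \<le> KR * h ^ (N + 1)"
    and KH: "\<forall>h. 0 < h \<longrightarrow> h \<le> 1 \<longrightarrow> \<bar>\<Sum>k=1..N. h ^ k * Hk k\<bar> \<le> KH * h"
    and h: "0 < h" "h \<le> h1" "h \<le> 1" "(KH + KR) * h < c0 - M"
  shows "\<bar>deriv (vh h) x - deriv (vhat v N h) x\<bar> \<le> 4 * (KR * h ^ (N + 1)) / a"
proof -
  define f where "f = vh h"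
  have df: "(f has_real_derivative deriv f y) (at y)" "(deriv f has_real_derivative deriv (deriv f) y) (at y)" for y
    using vh_reg h(1) unfolding f_def by auto
  obtain ch where ch: "\<forall>y. - (h / 2) * deriv (deriv f) y + (P + deriv f y)\<^sup>2 / 2 + V y = ch"
    using vh_eq h(1) unfolding f_def by blast
  define \<delta> where "\<delta> = KR * h ^ (N + 1)"
  have \<delta>0: "\<delta> \<ge> 0" unfolding \<delta>_def using KR h by simp
  have \<delta>h: "\<delta> \<le> KR * h"
  proof -
    have "h ^ (N + 1) \<le> h ^ 1" by (rule power_decreasing) (use h in auto)
    then show ?thesis unfolding \<delta>_def using KR by (simp add: mult_left_mono)
  qed
  define CH where "CH = c0 + (\<Sum>k=1..N. h ^ k * Hk k)"
  define E where "E y = - (h / 2) * Qd h y + (Qh h y)\<^sup>2 / 2 + V y" for y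
  have ECH: "\<bar>E y - CH\<bar> \<le> \<delta>" for y
    unfolding E_def CH_def E_ident \<delta>_def using KR(2) h by simp
  have CHc0: "\<bar>CH - c0\<bar> \<le> KH * h" unfolding CH_def using KH h by simp
  define q where "q y = P + deriv f y" for y
  define w where "w y = q y - Qh h y" for y
  have wdef: "w y = deriv (vh h) y - deriv (vhat v N h) y" for y
    unfolding w_def q_def f_def deriv_vhat by simp
  have dq: "(q has_real_derivative deriv (deriv f) y) (at y)" for y
    unfolding q_def[abs_def] using DERIV_add[OF DERIV_const df(2)] by simp
  have dw: "(w has_real_derivative deriv (deriv f) y - Qd h y) (at y)" for y
    unfolding w_def[abs_def] by (intro DERIV_diff dq Qh_deriv)
  have ident: "- (h / 2) * (deriv (deriv f) y - Qd h y) + w y * (Qh h y + w y / 2) = ch - E y" for y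
  proof -
    have "- (h / 2) * deriv (deriv f) y + (q y)\<^sup>2 / 2 + V y = ch" using ch q_def by simp
    moreover have "q y = Qh h y + w y" unfolding w_def by simp
    ultimately show ?thesis unfolding E_def by (simp add: power2_eq_square field_simps)
  qed
  have cdf: "continuous_on UNIV (deriv f)" using df(2) by (meson DERIV_isCont continuous_at_imp_continuous_on)
  have pdf: "periodic1 (deriv f)" using per_deriv vh_per h unfolding f_def by blast
  have cq: "continuous_on UNIV q" unfolding q_def[abs_def] by (intro continuous_intros cdf)
  have pq: "periodic1 q" using pdf unfolding q_def[abs_def] periodic1_def by simp
  have cw: "continuous_on UNIV w" unfolding w_def[abs_def] by (intro continuous_intros cq Qh_cont)
  have pw: "periodic1 w" using pq Qh_per unfolding w_def[abs_def] periodic1_def by simp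
  have tdf: "tint (deriv f) = 0"
  proof -
    have pf: "periodic1 f" using vh_per h unfolding f_def by blast
    have "f (-1/2 + 1) = f (-1/2)" using pf unfolding periodic1_def by blast
    moreover have "tint (deriv f) = f (1/2) - f (-1/2)" by (rule tint_ftc[OF cdf df(1)])
    ultimately show ?thesis by simp
  qed
  have v0_ends: "v 0 (1/2) = v 0 (-1/2)"
  proof -
    have "v 0 (1/2) = tint (s c0) - P" unfolding v_0 v0_def pp_eq tint_def by simp
    moreover have "tint (s c0) = P" using c0 unfolding F_def by simp
    moreover have "v 0 (-1/2) = 0" unfolding v_0 v0_def by simp
    ultimately show ?thesis by simp
  qed
  have vj_ends: "v j (1/2) = v j (-1/2)" for j
  proof (cases "j = 0")
    case True then show ?thesis using v0_ends by simp
  next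
    case False
    then have "periodic1 (v j)" using vj_facts(4)[of j] by simp
    then have "v j (-1/2 + 1) = v j (-1/2)" unfolding periodic1_def by blast
    then show ?thesis by simp
  qed
  have cQP: "continuous_on UNIV (\<lambda>y. Qh h y - P)" by (intro continuous_intros Qh_cont)
  have tQ: "tint (\<lambda>y. Qh h y - P) = 0"
  proof -
    have "tint (\<lambda>y. Qh h y - P) = vhat v N h (1/2) - vhat v N h (-1/2)"
      by (rule tint_ftc[OF cQP vhat_deriv])
    also have "vhat v N h (1/2) = vhat v N h (-1/2)" unfolding vhat_def using vj_ends by simp
    finally show ?thesis by simp
  qed
  have tw: "tint w = 0"
  proof -
    have "w = (\<lambda>y. deriv f y - (Qh h y - P))" unfolding w_def[abs_def] q_def by (simp add: algebra_simps)
    then have "tint w = tint (deriv f) - tint (\<lambda>y. Qh h y - P)" using tint_diff[OF cdf cQP] by simp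
    then show ?thesis using tdf tQ by simp
  qed
  have tq: "tint q = P"
  proof -
    have "tint q = tint (\<lambda>y. P) + tint (deriv f)" unfolding q_def[abs_def] by (rule tint_add[OF continuous_on_const cdf])
    then show ?thesis using tdf by (simp add: tint_const)
  qed
  obtain xa where xa: "\<forall>y. w y \<le> w xa" using per_max[OF cw pw] by blast
  obtain xb where xb: "\<forall>y. w xb \<le> w y" using per_min[OF cw pw] by blast
  have wa0: "w xa \<ge> 0"
  proof (rule ccontr)
    assume "\<not> ?thesis"
    moreover have "tint w \<le> w xa" by (rule tint_le_const[OF cw]) (use xa in blast)
    ultimately show False using tw by simp
  qed
  have wb0: "w xb \<le> 0"
  proof (rule ccontr)
    assume "\<not> ?thesis"
    moreover have "w xb \<le> tint w" by (rule tint_ge_const[OF cw]) (use xb in blast)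
    ultimately show False using tw by simp
  qed
  have dwa: "deriv (deriv f) xa - Qd h xa = 0"
    by (rule DERIV_local_max[OF dw zero_less_one]) (use xa in blast)
  have dwb: "deriv (deriv f) xb - Qd h xb = 0"
    by (rule DERIV_local_min[OF dw zero_less_one]) (use xb in blast)
  have ea: "w xa * (Qh h xa + w xa / 2) = ch - E xa" using ident[of xa] dwa by simp
  have eb: "w xb * (Qh h xb + w xb / 2) = ch - E xb" using ident[of xb] dwb by simp
  have Qa: "a \<le> Qh h y" for y using a h by blast
  have "0 \<le> w xa * (Qh h xa + w xa / 2)" using wa0 Qa[of xa] a by simp
  then have ch_lo: "CH - \<delta> \<le> ch" using ea ECH[of xa] by (simp add: abs_le_iff)
  have chM: "M < ch"
  proof -
    have "KH * h + KR * h < c0 - M" using h by (simp add: algebra_simps)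
    then show ?thesis using ch_lo CHc0 \<delta>h by (simp add: abs_le_iff)
  qed
  have qpos: "q y > 0" for y
  proof (rule ccontr)
    assume "\<not> q y > 0"
    then have qy: "q y \<le> 0" by simp
    have neg: "deriv (deriv f) t < 0" if "q t = 0" for t
    proof -
      have "- (h / 2) * deriv (deriv f) t + (q t)\<^sup>2 / 2 + V t = ch" using ch q_def by simp
      then have "(h / 2) * deriv (deriv f) t = V t - ch" using that by simp
      moreover have "V t - ch < 0" using M_ge[of t] chM by simp
      ultimately have "(h / 2) * deriv (deriv f) t < 0" by linarith
      then show ?thesis using h(1) by (auto simp: mult_less_0_iff)
    qed
    have all: "q z \<le> 0" for z
    proof -
      define k where "k = \<lceil>y - z\<rceil>"
      have "y \<le> z + real_of_int k" unfolding k_def by linarith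
      then have "q (z + real_of_int k) \<le> 0"
        using stay_nonpos[of q "deriv (deriv f)" y "z + real_of_int k"] dq neg qy by blast
      then show ?thesis using per_int[OF pq] by simp
    qed
    have "tint q \<le> 0" by (rule tint_le_const[OF cq]) (use all in blast)
    then show False using tq Ppos by simp
  qed
  have pb: "a / 2 \<le> Qh h xb + w xb / 2"
  proof -
    have "Qh h xb + w xb / 2 = Qh h xb / 2 + q xb / 2" unfolding w_def by (simp add: field_simps)
    then show ?thesis using Qa[of xb] qpos[of xb] by simp
  qed
  have "w xb * (Qh h xb + w xb / 2) \<le> 0" using wb0 pb a by (simp add: mult_nonpos_nonneg)
  then have ch_hi: "ch \<le> CH + \<delta>" using eb ECH[of xb] by (simp add: abs_le_iff)
  have chE: "\<bar>ch - E y\<bar> \<le> 2 * \<delta>" for y using ch_lo ch_hi ECH[of y] by (simp add: abs_le_iff)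
  have "w xa * a \<le> w xa * (Qh h xa + w xa / 2)" using wa0 Qa[of xa] by (intro mult_left_mono) auto
  then have "w xa * a \<le> 2 * \<delta>" using ea chE[of xa] by (simp add: abs_le_iff)
  then have wa: "w xa \<le> 2 * \<delta> / a" using a by (simp add: pos_le_divide_eq)
  have "w xb * (Qh h xb + w xb / 2) \<le> w xb * (a / 2)" using pb wb0 by (rule mult_left_mono_neg)
  moreover have "- (2 * \<delta>) \<le> w xb * (Qh h xb + w xb / 2)" using eb chE[of xb] by (simp add: abs_le_iff)
  ultimately have "- (2 * \<delta>) \<le> w xb * (a / 2)" by linarith
  then have wb: "- (4 * \<delta> / a) \<le> w xb" using a by (simp add: field_simps)
  have "w x \<le> 4 * \<delta> / a" using xa[rule_format, of x] wa \<delta>0 a by (smt (verit) divide_right_mono)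
  moreover have "- (4 * \<delta> / a) \<le> w x" using xb[rule_format, of x] wb by linarith
  ultimately have "\<bar>w x\<bar> \<le> 4 * \<delta> / a" by (simp add: abs_le_iff)
  then show ?thesis unfolding wdef \<delta>_def .
qed

end

context mainloc
begin

lemma final_bigo:
  "(\<lambda>h. L2T (\<lambda>x. deriv (vh h) x - deriv (vhat v N h) x))
           \<in> O[at_right 0](\<lambda>h. h powr ((real N + 1) / 2))"
proof -
  obtain a h1 where a: "a > 0" "h1 > 0" "h1 \<le> 1" "\<forall>h x. 0 < h \<longrightarrow> h \<le> h1 \<longrightarrow> a \<le> Qh h x"
    using Qh_lower by blast
  obtain KR where KR: "KR \<ge> 0" "\<forall>h x. 0 < h \<longrightarrow> h \<le> 1 \<longrightarrow> \<bar>Rem h x\<bar> \<le> KR * h ^ (N + 1)"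
    using Rem_bound by blast
  obtain KH where KH: "KH \<ge> 0" "\<forall>h. 0 < h \<longrightarrow> h \<le> 1 \<longrightarrow> \<bar>\<Sum>k=1..N. h ^ k * Hk k\<bar> \<le> KH * h"
    using CH_bound by blast
  define h0 where "h0 = min h1 ((c0 - M) / (KH + KR + 1))"
  have cM: "0 < c0 - M" using c0 by simp
  have h0: "0 < h0" unfolding h0_def using a cM KH KR by simp
  define C where "C = 4 * KR / a"
  have C: "C \<ge> 0" unfolding C_def using KR a by simp
  have bound: "norm (L2T (\<lambda>x. deriv (vh h) x - deriv (vhat v N h) x)) \<le> C * norm (h powr ((real N + 1) / 2))"
    if h: "h \<in> {0<..<h0}" for h
  proof -
    have hh: "0 < h" "h \<le> h1" "h \<le> 1" using h a unfolding h0_def by auto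
    have "h < (c0 - M) / (KH + KR + 1)" using h unfolding h0_def by simp
    then have "h * (KH + KR + 1) < c0 - M" using KH KR by (simp add: pos_less_divide_eq)
    then have hc: "(KH + KR) * h < c0 - M" using hh by (simp add: algebra_simps)
    define w where "w x = deriv (vh h) x - deriv (vhat v N h) x" for x
    have wb: "\<bar>w x\<bar> \<le> C * h ^ (N + 1)" for x
      using w_bound[OF a(1) a(4) KR KH(2) hh hc, of x] unfolding w_def C_def by (simp add: algebra_simps)
    have cdv: "continuous_on UNIV (deriv (vh h))"
      using vh_reg hh(1) by (meson DERIV_isCont continuous_at_imp_continuous_on)
    have cw: "continuous_on UNIV w" unfolding w_def[abs_def] deriv_vhat
      by (intro continuous_intros cdv Qh_cont)
    have "tint (\<lambda>x. (w x)\<^sup>2) \<le> (C * h ^ (N + 1))\<^sup>2"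
    proof (rule tint_le_const)
      show "continuous_on UNIV (\<lambda>x. (w x)\<^sup>2)" by (intro continuous_intros cw)
      fix x show "(w x)\<^sup>2 \<le> (C * h ^ (N + 1))\<^sup>2"
        using wb[of x] C hh by (simp add: abs_le_square_iff[symmetric])
    qed
    then have "L2T w \<le> sqrt ((C * h ^ (N + 1))\<^sup>2)" unfolding L2T_def by (rule real_sqrt_le_mono)
    also have "\<dots> = C * h ^ (N + 1)" using C hh by simp
    also have "h ^ (N + 1) \<le> h powr ((real N + 1) / 2)"
    proof -
      have "h ^ (N + 1) = h powr (real (N + 1))" using powr_realpow[OF hh(1), of "N + 1"] by simp
      also have "\<dots> \<le> h powr ((real N + 1) / 2)" by (rule powr_mono') (use hh in auto)
      finally show ?thesis .
    qed
    then have "C * h ^ (N + 1) \<le> C * h powr ((real N + 1) / 2)" using C by (rule mult_left_mono)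
    finally have "L2T w \<le> C * h powr ((real N + 1) / 2)" .
    moreover have "0 \<le> tint (\<lambda>x. (w x)\<^sup>2)" by (rule tint_ge_const) (auto intro!: continuous_intros cw)
    then have "L2T w \<ge> 0" unfolding L2T_def by simp
    ultimately show ?thesis unfolding w_def[symmetric] by simp
  qed
  show ?thesis
    by (rule bigoI[where c = C], rule eventually_mono[OF eventually_at_right_real[OF h0]]) (use bound in blast)
qed

end

theorem mainTheorem5:
  fixes V :: "real \<Rightarrow> real" and P :: real
    and vh :: "real \<Rightarrow> real \<Rightarrow> real" and v :: "nat \<Rightarrow> real \<Rightarrow> real" and N :: nat
  assumes V_smooth: "smooth V"
    and V_per: "periodic1 V"
    and V_sym: "\<forall>x. V (- x) = V x"
    and V_min: "\<forall>x\<in>{-1/2..<1/2}. x \<noteq> 0 \<longrightarrow> V 0 < V x"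
    and V_nondeg: "(deriv ^^ 2) V 0 > 0"
    and P_gt: "P > Pcrit V"
    and vh_reg: "\<forall>h>0. (\<forall>x. (vh h has_real_derivative deriv (vh h) x) (at x)) \<and>
                        (\<forall>x. (deriv (vh h) has_real_derivative deriv (deriv (vh h)) x) (at x))"
    and vh_per: "\<forall>h>0. periodic1 (vh h)"
    and vh_eq: "\<forall>h>0. \<exists>c. \<forall>x. - (h / 2) * deriv (deriv (vh h)) x
                              + (P + deriv (vh h) x)\<^sup>2 / 2 + V x = c"
    and v_0: "v 0 = v0 V P"
    and v_smooth: "\<forall>j\<ge>1. smooth (v j) \<and> periodic1 (v j)"
    and v_eq: "\<forall>j\<ge>1. \<forall>x. - (1/2) * deriv (deriv (v (j - 1))) x + pplus V P x * deriv (v j) x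
                   + (1/2) * (\<Sum>i=1..j-1. deriv (v i) x * deriv (v (j - i)) x) = Hbar_j V P v j"
  shows "(\<lambda>h. L2T (\<lambda>x. deriv (vh h) x - deriv (vhat v N h) x))
           \<in> O[at_right 0](\<lambda>h. h powr ((real N + 1) / 2))"
proof -
  have nc: "V 0 < V (1/4)" using V_min by simp
  interpret pot V by unfold_locales (rule V_smooth, rule V_per, rule nc)
  interpret mainloc V P vh v N
    by unfold_locales (rule P_gt, rule vh_reg, rule vh_per, rule vh_eq, rule v_0, rule v_smooth, rule v_eq)
  show ?thesis by (rule final_bigo)
qed

end
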